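(* Let $\kappa$ be a cumulant function with effective domain $\Theta$ satisfying Assumption (A1), let $\varphi>0$, and let $Y_1,\dots,Y_n$ be independent with $Y_i\sim\mathrm{EDF}(\theta_i,v_i,\varphi,\kappa)$, $v_i>0$, $\theta_i\in\mathring\Theta$, and $\theta_1\le\dots\le\theta_n$. Let $\mathcal J\subseteq\{1,\dots,n\}^2$ be any set of ordered pairs (i.e. $(j,k)\in\mathcal J\Rightarrow j\le k$), write $\mu_i=\mathbb E[Y_i]$, let $1-\alpha\in(0,1)$ and $\delta=\alpha/(2|\mathcal J|)$. Define $$L^\alpha_{\mathbf Y,i}=\sup_{(j,k)\in\mathcal J:\,\theta_i\ge\theta_k}l^\delta(Z_{j:k},v_{j:k},\varphi,\kappa),\qquad U^\alpha_{\mathbf Y,i}=\inf_{(j,k)\in\mathcal J:\,\theta_i\le\theta_j}u^\delta(Z_{j:k},v_{j:k},\varphi,\kappa),$$ with the conventions $\inf\emptyset=\sup_{\theta\in\mathring\Theta}\kappa'(\theta)$ and $\sup\emptyset=\inf_{\theta\in\mathring\Theta}\kappa'(\theta)$. Then $$\mathbb P\big(L^\alpha_{\mathbf Y,i}\le\mu_i\le U^\alpha_{\mathbf Y,i}\ \text{for all } i\in\{1,\dots,n\}\big)\ge1-\alpha.$$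
   Context: A real random variable $Y$ follows $\mathrm{EDF}(\theta,v,\varphi,\kappa)$ if it has density $f(y)=\exp\{(y\theta-\kappa(\theta))/(\varphi/v)+a(y;v/\varphi)\}$ with respect to a $\sigma$-finite measure on $\mathbb R$ not depending on $\theta$; $\Theta$ is the effective domain, $\kappa$ the cumulant function, $v>0$ the volume, $\varphi>0$ the dispersion. Assumption (A1): $\Theta$ has non-empty interior $\mathring{\Theta}$ and the dominating measures are not a single point mass; then $\mathbb E[Y]=\kappa'(\theta)$ for $\theta\in\mathring\Theta$, $h=(\kappa')^{-1}$ on $\kappa'(\mathring\Theta)$. For $\mu\in\kappa'(\mathring\Theta)$, $F(y;h(\mu),v,\varphi,\kappa)=\mathbb P(W\le y)$, $F^*(y;h(\mu),v,\varphi,\kappa)=\mathbb P(W<y)$ with $W\sim\mathrm{EDF}(h(\mu),v,\varphi,\kappa)$; $l^{\delta}(y,v,\varphi,\kappa)=\inf\{\mu\in\kappa'(\mathring\Theta):F^*(y;h(\mu),v,\varphi,\kappa)\le1-\delta\}$ and $u^{\delta}(y,v,\varphi,\kappa)=\sup\{\mu\in\kappa'(\mathring\Theta):F(y;h(\mu),v,\varphi,\kappa)\ge\delta\}$. For $1\le j\le k\le n$: $v_{j:k}=\sum_{i=j}^kv_i$ and $Z_{j:k}=\frac1{v_{j:k}}\sum_{i=j}^kv_iY_i$. *)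

theory Defs
  imports "HOL-Probability.Probability"
begin

text \<open>Exponential dispersion family.  The dominating measure and the function a
  depend only on the weight w = v/phi: nu w and a y w.\<close>

definition EDF :: "(real \<Rightarrow> real measure) \<Rightarrow> (real \<Rightarrow> real \<Rightarrow> real) \<Rightarrow> (real \<Rightarrow> real)
    \<Rightarrow> real \<Rightarrow> real \<Rightarrow> real \<Rightarrow> real measure" where
  "EDF \<nu> a \<kappa> \<theta> v \<phi> =
     density (\<nu> (v / \<phi>)) (\<lambda>y. ennreal (exp ((y * \<theta> - \<kappa> \<theta>) / (\<phi> / v) + a y (v / \<phi>))))"

text \<open>kappa is the cumulant function with effective domain Theta of the family
  (nu, a): for every weight w > 0, nu w is a sigma-finite measure on the reals,
  Theta is exactly the set where the Laplace-type integral is finite, and there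
  it equals exp (w * kappa theta), i.e. all EDF densities integrate to one.\<close>

definition is_EDF_family :: "(real \<Rightarrow> real measure) \<Rightarrow> (real \<Rightarrow> real \<Rightarrow> real) \<Rightarrow> (real \<Rightarrow> real)
    \<Rightarrow> real set \<Rightarrow> bool" where
  "is_EDF_family \<nu> a \<kappa> \<Theta> \<longleftrightarrow>
     (\<forall>w>0. sets (\<nu> w) = sets borel \<and> sigma_finite_measure (\<nu> w) \<and>
        (\<lambda>y. a y w) \<in> borel_measurable borel \<and>
        \<Theta> = {\<theta>. (\<integral>\<^sup>+ y. ennreal (exp (y * \<theta> * w + a y w)) \<partial>\<nu> w) < \<infinity>} \<and>
        (\<forall>\<theta>\<in>\<Theta>. (\<integral>\<^sup>+ y. ennreal (exp (y * \<theta> * w + a y w)) \<partial>\<nu> w) = ennreal (exp (w * \<kappa> \<theta>))))"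

definition A1 :: "(real \<Rightarrow> real measure) \<Rightarrow> real set \<Rightarrow> bool" where
  "A1 \<nu> \<Theta> \<longleftrightarrow> interior \<Theta> \<noteq> {} \<and>
     (\<forall>w>0. \<not> (\<exists>c. emeasure (\<nu> w) (UNIV - {c}) = 0))"

definition mean_space :: "(real \<Rightarrow> real) \<Rightarrow> real set \<Rightarrow> real set" where
  "mean_space \<kappa> \<Theta> = deriv \<kappa> ` interior \<Theta>"

definition link_h :: "(real \<Rightarrow> real) \<Rightarrow> real set \<Rightarrow> real \<Rightarrow> real" where
  "link_h \<kappa> \<Theta> \<mu> = the_inv_into (interior \<Theta>) (deriv \<kappa>) \<mu>"

definition edf_F :: "(real \<Rightarrow> real measure) \<Rightarrow> (real \<Rightarrow> real \<Rightarrow> real) \<Rightarrow> (real \<Rightarrow> real) \<Rightarrow> real set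
    \<Rightarrow> real \<Rightarrow> real \<Rightarrow> real \<Rightarrow> real \<Rightarrow> real" where
  "edf_F \<nu> a \<kappa> \<Theta> y \<mu> v \<phi> = measure (EDF \<nu> a \<kappa> (link_h \<kappa> \<Theta> \<mu>) v \<phi>) {..y}"

definition edf_Fstar :: "(real \<Rightarrow> real measure) \<Rightarrow> (real \<Rightarrow> real \<Rightarrow> real) \<Rightarrow> (real \<Rightarrow> real) \<Rightarrow> real set
    \<Rightarrow> real \<Rightarrow> real \<Rightarrow> real \<Rightarrow> real \<Rightarrow> real" where
  "edf_Fstar \<nu> a \<kappa> \<Theta> y \<mu> v \<phi> = measure (EDF \<nu> a \<kappa> (link_h \<kappa> \<Theta> \<mu>) v \<phi>) {..<y}"

definition inf_conv :: "real set \<Rightarrow> ereal set \<Rightarrow> ereal" where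
  "inf_conv Mset S = (if S = {} then Sup (ereal ` Mset) else Inf S)"

definition sup_conv :: "real set \<Rightarrow> ereal set \<Rightarrow> ereal" where
  "sup_conv Mset S = (if S = {} then Inf (ereal ` Mset) else Sup S)"

definition l_delta :: "(real \<Rightarrow> real measure) \<Rightarrow> (real \<Rightarrow> real \<Rightarrow> real) \<Rightarrow> (real \<Rightarrow> real) \<Rightarrow> real set
    \<Rightarrow> real \<Rightarrow> real \<Rightarrow> real \<Rightarrow> real \<Rightarrow> ereal" where
  "l_delta \<nu> a \<kappa> \<Theta> \<delta> y v \<phi> =
     inf_conv (mean_space \<kappa> \<Theta>)
       (ereal ` {\<mu> \<in> mean_space \<kappa> \<Theta>. edf_Fstar \<nu> a \<kappa> \<Theta> y \<mu> v \<phi> \<le> 1 - \<delta>})"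

definition u_delta :: "(real \<Rightarrow> real measure) \<Rightarrow> (real \<Rightarrow> real \<Rightarrow> real) \<Rightarrow> (real \<Rightarrow> real) \<Rightarrow> real set
    \<Rightarrow> real \<Rightarrow> real \<Rightarrow> real \<Rightarrow> real \<Rightarrow> ereal" where
  "u_delta \<nu> a \<kappa> \<Theta> \<delta> y v \<phi> =
     sup_conv (mean_space \<kappa> \<Theta>)
       (ereal ` {\<mu> \<in> mean_space \<kappa> \<Theta>. edf_F \<nu> a \<kappa> \<Theta> y \<mu> v \<phi> \<ge> \<delta>})"

definition vol :: "(nat \<Rightarrow> real) \<Rightarrow> nat \<Rightarrow> nat \<Rightarrow> real" where
  "vol v j k = (\<Sum>i = j..k. v i)"

definition Zmean :: "(nat \<Rightarrow> real) \<Rightarrow> (nat \<Rightarrow> 'a \<Rightarrow> real) \<Rightarrow> nat \<Rightarrow> nat \<Rightarrow> 'a \<Rightarrow> real" where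
  "Zmean v Y j k \<omega> = (1 / vol v j k) * (\<Sum>i = j..k. v i * Y i \<omega>)"

definition L_bound :: "(real \<Rightarrow> real measure) \<Rightarrow> (real \<Rightarrow> real \<Rightarrow> real) \<Rightarrow> (real \<Rightarrow> real) \<Rightarrow> real set
    \<Rightarrow> real \<Rightarrow> real \<Rightarrow> (nat \<times> nat) set \<Rightarrow> (nat \<Rightarrow> real) \<Rightarrow> (nat \<Rightarrow> real)
    \<Rightarrow> (nat \<Rightarrow> 'a \<Rightarrow> real) \<Rightarrow> nat \<Rightarrow> 'a \<Rightarrow> ereal" where
  "L_bound \<nu> a \<kappa> \<Theta> \<phi> \<delta> J \<theta> v Y i \<omega> =
     sup_conv (mean_space \<kappa> \<Theta>)
       ((\<lambda>(j, k). l_delta \<nu> a \<kappa> \<Theta> \<delta> (Zmean v Y j k \<omega>) (vol v j k) \<phi>)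
          ` {(j, k) \<in> J. \<theta> i \<ge> \<theta> k})"

definition U_bound :: "(real \<Rightarrow> real measure) \<Rightarrow> (real \<Rightarrow> real \<Rightarrow> real) \<Rightarrow> (real \<Rightarrow> real) \<Rightarrow> real set
    \<Rightarrow> real \<Rightarrow> real \<Rightarrow> (nat \<times> nat) set \<Rightarrow> (nat \<Rightarrow> real) \<Rightarrow> (nat \<Rightarrow> real)
    \<Rightarrow> (nat \<Rightarrow> 'a \<Rightarrow> real) \<Rightarrow> nat \<Rightarrow> 'a \<Rightarrow> ereal" where
  "U_bound \<nu> a \<kappa> \<Theta> \<phi> \<delta> J \<theta> v Y i \<omega> =
     inf_conv (mean_space \<kappa> \<Theta>)
       ((\<lambda>(j, k). u_delta \<nu> a \<kappa> \<Theta> \<delta> (Zmean v Y j k \<omega>) (vol v j k) \<phi>)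
          ` {(j, k) \<in> J. \<theta> i \<le> \<theta> j})"

end

theory Submission
  imports Defs
begin

lemma sums_term_le:
  fixes f :: "nat \<Rightarrow> real"
  assumes "f sums s" "\<And>n. 0 \<le> f n" shows "f k \<le> s"
proof -
  have "f k \<le> (\<Sum>n<Suc k. f n)" using assms(2) by (simp add: sum_nonneg)
  also have "\<dots> \<le> suminf f"
    using assms by (intro sum_le_suminf) (auto simp: sums_iff)
  finally show ?thesis using assms(1) by (simp add: sums_iff)
qed

lemma pow_fact_le_exp:
  fixes x :: real assumes "0 \<le> x" shows "x ^ k / fact k \<le> exp x"
proof -
  have s: "(\<lambda>n. x ^ n / fact n) sums exp x"
    using exp_converges[of x] by (simp add: divide_inverse mult.commute)
  show ?thesis using sums_term_le[OF s] assms by simp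
qed

lemma poly_exp_bound:
  fixes y r \<tau> :: real assumes "0 \<le> \<tau>" "\<tau> < r"
  shows "\<bar>y\<bar> ^ k * exp (\<tau> * \<bar>y\<bar>) \<le> fact k / (r - \<tau>) ^ k * exp (r * \<bar>y\<bar>)"
proof -
  have pos: "(r - \<tau>) ^ k > 0" using assms by simp
  have "((r - \<tau>) * \<bar>y\<bar>) ^ k / fact k \<le> exp ((r - \<tau>) * \<bar>y\<bar>)"
    using assms by (intro pow_fact_le_exp) auto
  hence "((r - \<tau>) * \<bar>y\<bar>) ^ k \<le> exp ((r - \<tau>) * \<bar>y\<bar>) * fact k"
    by (simp add: divide_le_eq)
  hence "(r - \<tau>) ^ k * \<bar>y\<bar> ^ k \<le> fact k * exp ((r - \<tau>) * \<bar>y\<bar>)"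
    by (simp add: power_mult_distrib mult.commute)
  also have "fact k * exp ((r - \<tau>) * \<bar>y\<bar>) = (r - \<tau>) ^ k * (fact k / (r - \<tau>) ^ k * exp ((r - \<tau>) * \<bar>y\<bar>))"
    using assms by simp
  finally have "(r - \<tau>) ^ k * \<bar>y\<bar> ^ k \<le> (r - \<tau>) ^ k * (fact k / (r - \<tau>) ^ k * exp ((r - \<tau>) * \<bar>y\<bar>))" .
  hence 1: "\<bar>y\<bar> ^ k \<le> fact k / (r - \<tau>) ^ k * exp ((r - \<tau>) * \<bar>y\<bar>)"
    using pos by (rule mult_left_le_imp_le) 
  have "\<bar>y\<bar> ^ k * exp (\<tau> * \<bar>y\<bar>) \<le> fact k / (r - \<tau>) ^ k * exp ((r - \<tau>) * \<bar>y\<bar>) * exp (\<tau> * \<bar>y\<bar>)"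
    using 1 by (intro mult_right_mono) auto
  also have "exp ((r - \<tau>) * \<bar>y\<bar>) * exp (\<tau> * \<bar>y\<bar>) = exp (r * \<bar>y\<bar>)"
    by (simp add: exp_add[symmetric] left_diff_distrib)
  hence "fact k / (r - \<tau>) ^ k * exp ((r - \<tau>) * \<bar>y\<bar>) * exp (\<tau> * \<bar>y\<bar>) = fact k / (r - \<tau>) ^ k * exp (r * \<bar>y\<bar>)"
    by (simp only: mult.assoc)
  finally show ?thesis .
qed

definition mom :: "real measure \<Rightarrow> nat \<Rightarrow> 'a::{real_normed_field,banach,second_countable_topology} \<Rightarrow> 'a" where
  "mom P m t = (\<integral>y. of_real y ^ m * exp (of_real y * t) \<partial>P)"

lemma integrable_poly_exp:
  fixes P :: "real measure"
  assumes sets: "sets P = sets borel" and int: "integrable P (\<lambda>y. exp (r * \<bar>y\<bar>))"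
    and "0 \<le> \<tau>" "\<tau> < r"
  shows "integrable P (\<lambda>y. \<bar>y\<bar> ^ k * exp (\<tau> * \<bar>y\<bar>))"
proof (rule Bochner_Integration.integrable_bound)
  show "integrable P (\<lambda>y. fact k / (r - \<tau>) ^ k * exp (r * \<bar>y\<bar>))"
    using int by simp
  show "(\<lambda>y. \<bar>y\<bar> ^ k * exp (\<tau> * \<bar>y\<bar>)) \<in> borel_measurable P"
    using sets by (simp add: measurable_cong_sets[OF sets refl])
  show "AE y in P. norm (\<bar>y\<bar> ^ k * exp (\<tau> * \<bar>y\<bar>)) \<le> norm (fact k / (r - \<tau>) ^ k * exp (r * \<bar>y\<bar>))"
    using poly_exp_bound[OF assms(3,4)] assms by (auto intro!: AE_I2 simp: abs_mult)
qed

lemma mom_series: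
  fixes t u :: "'a::{real_normed_field,banach,second_countable_topology}"
  assumes sets: "sets P = sets borel" and int: "integrable P (\<lambda>y. exp (r * \<bar>y\<bar>))"
    and tau: "0 \<le> \<tau>" "\<tau> + norm u < r"
    and bnd: "\<And>y. norm (exp (of_real y * t)) \<le> exp (\<tau> * \<bar>y\<bar>)"
  shows "(\<lambda>n. u ^ n / fact n * mom P (n + m) t) sums mom P m (t + u)"
proof -
  have meas[measurable]: "\<And>f. f \<in> borel_measurable borel \<Longrightarrow> f \<in> borel_measurable P"
    by (simp add: measurable_cong_sets[OF sets refl])
  define f where "f n y = of_real y ^ m * exp (of_real y * t) * ((of_real y * u) ^ n / fact n)" for n y
  define g where "g n y = \<bar>y\<bar> ^ m * exp (\<tau> * \<bar>y\<bar>) * ((\<bar>y\<bar> * norm u) ^ n / fact n)" for n y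
  define G where "G y = \<bar>y\<bar> ^ m * exp ((\<tau> + norm u) * \<bar>y\<bar>)" for y
  have fmeas: "f n \<in> borel_measurable P" for n
    unfolding f_def by (intro meas) measurable
  have gmeas: "g n \<in> borel_measurable P" for n
    unfolding g_def by (intro meas) measurable
  have expser: "(\<lambda>n. z ^ n / fact n) sums exp z" for z :: 'a
    using exp_converges[of z] by (simp add: divide_inverse scaleR_conv_of_real of_real_inverse mult.commute)
  have expserr: "(\<lambda>n. z ^ n / fact n) sums exp z" for z :: real
    using exp_converges[of z] by (simp add: divide_inverse mult.commute)
  have fsum: "(\<lambda>n. f n y) sums (of_real y ^ m * exp (of_real y * (t + u)))" for y
  proof -
    have "(\<lambda>n. of_real y ^ m * exp (of_real y * t) * ((of_real y * u) ^ n / fact n)) sums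
          (of_real y ^ m * exp (of_real y * t) * exp (of_real y * u))"
      by (intro sums_mult expser)
    thus ?thesis by (simp add: f_def distrib_left exp_add mult.assoc)
  qed
  have gsum: "(\<lambda>n. g n y) sums G y" for y
  proof -
    have "(\<lambda>n. \<bar>y\<bar> ^ m * exp (\<tau> * \<bar>y\<bar>) * ((\<bar>y\<bar> * norm u) ^ n / fact n)) sums
          (\<bar>y\<bar> ^ m * exp (\<tau> * \<bar>y\<bar>) * exp (\<bar>y\<bar> * norm u))"
      by (intro sums_mult expserr)
    moreover have "exp (\<tau> * \<bar>y\<bar>) * exp (\<bar>y\<bar> * norm u) = exp ((\<tau> + norm u) * \<bar>y\<bar>)"
      by (subst exp_add[symmetric]) (simp add: algebra_simps)
    ultimately show ?thesis by (simp only: g_def G_def mult.assoc)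
  qed
  have g_nonneg: "0 \<le> g n y" for n y unfolding g_def by auto
  have fg: "norm (f n y) \<le> g n y" for n y
  proof -
    have "norm (f n y) = \<bar>y\<bar> ^ m * norm (exp (of_real y * t)) * ((\<bar>y\<bar> * norm u) ^ n / fact n)"
      by (simp add: f_def norm_mult norm_power norm_divide)
    also have "\<dots> \<le> g n y" unfolding g_def
      by (intro mult_right_mono mult_left_mono bnd) auto
    finally show ?thesis .
  qed
  have G_int: "integrable P G"
    unfolding G_def using tau by (intro integrable_poly_exp[OF sets int]) auto
  have gG: "g n y \<le> G y" for n y
  proof -
    show ?thesis using sums_term_le[OF gsum[of y]] g_nonneg by simp
  qed
  have g_int: "integrable P (g n)" for n
  proof (rule Bochner_Integration.integrable_bound[OF G_int gmeas], intro AE_I2)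
    fix y have "G y \<ge> 0" unfolding G_def by simp
    thus "norm (g n y) \<le> norm (G y)" using gG[of n y] g_nonneg[of n y] by simp
  qed
  have f_int: "integrable P (f n)" for n
  proof (rule Bochner_Integration.integrable_bound[OF G_int fmeas], intro AE_I2)
    fix y have "G y \<ge> 0" unfolding G_def by simp
    thus "norm (f n y) \<le> norm (G y)" using gG[of n y] fg[of n y] by simp
  qed
  have "(\<integral>\<^sup>+y. G y \<partial>P) = (\<integral>\<^sup>+y. (\<Sum>n. ennreal (g n y)) \<partial>P)"
  proof (rule nn_integral_cong)
    fix y
    have "(\<Sum>n. ennreal (g n y)) = ennreal (\<Sum>n. g n y)"
      by (rule suminf_ennreal2[OF g_nonneg sums_summable[OF gsum]])
    thus "ennreal (G y) = (\<Sum>n. ennreal (g n y))" using gsum[of y] by (simp add: sums_iff)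
  qed
  also have "\<dots> = (\<Sum>n. \<integral>\<^sup>+y. ennreal (g n y) \<partial>P)"
    by (rule nn_integral_suminf, rule measurable_compose[OF gmeas measurable_ennreal])
  also have "\<dots> = (\<Sum>n. ennreal (\<integral>y. g n y \<partial>P))"
    by (rule suminf_cong, rule nn_integral_eq_integral[OF g_int]) (simp add: g_nonneg)
  finally have eqG: "(\<integral>\<^sup>+y. G y \<partial>P) = (\<Sum>n. ennreal (\<integral>y. g n y \<partial>P))" .
  have Gnn: "(\<integral>\<^sup>+y. G y \<partial>P) < \<top>"
  proof -
    have "(\<integral>\<^sup>+y. ennreal (norm (G y)) \<partial>P) < \<top>" using conjunct2[OF G_int[unfolded integrable_iff_bounded]] by simp
    moreover have "norm (G y) = G y" for y unfolding G_def by simp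
    ultimately show ?thesis by (simp only:)
  qed
  have ig_nonneg: "0 \<le> (\<integral>y. g n y \<partial>P)" for n
    by (rule integral_nonneg_AE) (simp add: g_nonneg)
  have sg: "summable (\<lambda>n. \<integral>y. g n y \<partial>P)"
    by (rule summable_suminf_not_top[OF ig_nonneg]) (use eqG Gnn in simp)
  have sf: "summable (\<lambda>n. \<integral>y. norm (f n y) \<partial>P)"
  proof (rule summable_comparison_test'[OF sg])
    fix n :: nat
    have "(\<integral>y. norm (f n y) \<partial>P) \<le> (\<integral>y. g n y \<partial>P)"
      by (rule integral_mono[OF integrable_norm[OF f_int] g_int fg])
    moreover have "0 \<le> (\<integral>y. norm (f n y) \<partial>P)" by (rule integral_nonneg_AE) simp
    ultimately show "norm (\<integral>y. norm (f n y) \<partial>P) \<le> (\<integral>y. g n y \<partial>P)" by simp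
  qed
  have sfy: "summable (\<lambda>n. norm (f n y))" for y
  proof (rule summable_comparison_test'[OF sums_summable[OF gsum[of y]]])
    fix n :: nat show "norm (norm (f n y)) \<le> g n y" using fg[of n y] by simp
  qed
  have "(\<lambda>n. integral\<^sup>L P (f n)) sums (\<integral>y. (\<Sum>n. f n y) \<partial>P)"
    by (rule sums_integral[OF f_int _ sf]) (simp add: sfy)
  moreover have "(\<integral>y. (\<Sum>n. f n y) \<partial>P) = mom P m (t + u)"
    unfolding mom_def using fsum by (simp add: sums_iff)
  moreover have "integral\<^sup>L P (f n) = u ^ n / fact n * mom P (n + m) t" for n
  proof -
    have feq: "f n y = u ^ n / fact n * (of_real y ^ (n + m) * exp (of_real y * t))" for y
      by (simp add: f_def power_add power_mult_distrib divide_inverse mult_ac)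
    have "integral\<^sup>L P (f n) = (\<integral>y. u ^ n / fact n * (of_real y ^ (n + m) * exp (of_real y * t)) \<partial>P)"
      by (rule Bochner_Integration.integral_cong[OF refl feq])
    also have "\<dots> = u ^ n / fact n * mom P (n + m) t"
      unfolding mom_def by (rule integral_mult_right_zero)
    finally show ?thesis .
  qed
  ultimately show ?thesis by simp
qed


lemma mom_deriv:
  fixes P :: "real measure"
  assumes sets: "sets P = sets borel" and int: "integrable P (\<lambda>y. exp (r * \<bar>y\<bar>))"
    and s: "\<bar>s\<bar> < r"
  shows "((\<lambda>x. mom P m x :: real) has_field_derivative mom P (Suc m) s) (at s)"
proof -
  define c where "c n = mom P (n + m) s / fact n" for n
  define F where "F u = (\<Sum>n. c n * u ^ n)" for u :: real
  define \<rho> where "\<rho> = r - \<bar>s\<bar>"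
  have rho: "\<rho> > 0" using s by (simp add: \<rho>_def)
  have ser: "(\<lambda>n. c n * u ^ n) sums mom P m (s + u)" if "\<bar>u\<bar> < \<rho>" for u
  proof -
    have "(\<lambda>n. u ^ n / fact n * mom P (n + m) s) sums mom P m (s + u)"
    proof (rule mom_series[OF sets int, of "\<bar>s\<bar>"])
      show "0 \<le> \<bar>s\<bar>" by simp
      show "\<bar>s\<bar> + norm u < r" using that by (simp add: \<rho>_def)
      fix y :: real
      have "y * s \<le> \<bar>s\<bar> * \<bar>y\<bar>" by (metis abs_ge_self abs_mult mult.commute)
      thus "norm (exp (of_real y * s)) \<le> exp (\<bar>s\<bar> * \<bar>y\<bar>)" by simp
    qed
    thus ?thesis by (simp add: c_def mult.commute)
  qed
  have Feq: "F u = mom P m (s + u)" if "\<bar>u\<bar> < \<rho>" for u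
    using ser[OF that] by (simp add: F_def sums_iff)
  have sm: "summable (\<lambda>n. c n * (\<rho>/2) ^ n)"
    using ser[of "\<rho>/2"] rho by (auto simp: sums_iff)
  have "(F has_field_derivative (\<Sum>n. diffs c n * 0 ^ n)) (at 0)"
    unfolding F_def by (rule termdiffs_strong[OF sm]) (use rho in simp)
  hence dF: "(F has_field_derivative c 1) (at 0)"
    by (simp add: diffs_def)
  have c1: "c 1 = mom P (Suc m) s" by (simp add: c_def)
  have "(F has_field_derivative c 1) (at (s + - s))" using dF by simp
  hence "((\<lambda>x. F (x + - s)) has_field_derivative c 1) (at s)" by (simp only: DERIV_shift)
  hence "((\<lambda>x. mom P m x) has_field_derivative c 1) (at s)"
  proof (rule has_field_derivative_transform_within_open)
    show "open (ball s \<rho>)" by simp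
    show "s \<in> ball s \<rho>" using rho by simp
    fix x assume "x \<in> ball s \<rho>"
    hence "\<bar>x + - s\<bar> < \<rho>" by (simp add: dist_real_def abs_minus_commute)
    thus "F (x + - s) = mom P m x" using Feq by simp
  qed
  thus ?thesis using c1 by simp
qed

lemma integrable_exp_abs_from_mgf:
  fixes P :: "real measure"
  assumes sets: "sets P = sets borel" and r: "r \<ge> 0"
    and f1: "(\<integral>\<^sup>+y. exp (r * y) \<partial>P) < \<infinity>" and f2: "(\<integral>\<^sup>+y. exp (- r * y) \<partial>P) < \<infinity>"
  shows "integrable P (\<lambda>y. exp (r * \<bar>y\<bar>))"
proof (rule integrableI_nonneg)
  show "(\<lambda>y. exp (r * \<bar>y\<bar>)) \<in> borel_measurable P"
    by (simp add: measurable_cong_sets[OF sets refl])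
  show "AE y in P. 0 \<le> exp (r * \<bar>y\<bar>)" by simp
  have "(\<integral>\<^sup>+y. exp (r * \<bar>y\<bar>) \<partial>P) \<le> (\<integral>\<^sup>+y. (ennreal (exp (r * y)) + ennreal (exp (- r * y))) \<partial>P)"
  proof (rule nn_integral_mono)
    fix y
    have "exp (r * \<bar>y\<bar>) \<le> exp (r * y) + exp (- r * y)"
      by (cases "y \<ge> 0") (auto simp: add_increasing add_increasing2)
    thus "ennreal (exp (r * \<bar>y\<bar>)) \<le> ennreal (exp (r * y)) + ennreal (exp (- r * y))"
      by (simp add: ennreal_plus[symmetric] del: ennreal_plus)
  qed
  also have "\<dots> = (\<integral>\<^sup>+y. exp (r * y) \<partial>P) + (\<integral>\<^sup>+y. exp (- r * y) \<partial>P)"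
    by (rule nn_integral_add) (simp_all add: measurable_cong_sets[OF sets refl])
  also have "\<dots> < \<infinity>" using f1 f2 by (simp add: less_top)
  finally show "(\<integral>\<^sup>+y. exp (r * \<bar>y\<bar>) \<partial>P) < \<infinity>" .
qed

lemma mgf_unique:
  fixes P1 P2 :: "real measure"
  assumes p1: "prob_space P1" and p2: "prob_space P2"
    and s1: "sets P1 = sets borel" and s2: "sets P2 = sets borel"
    and r: "r > 0"
    and fin: "\<And>s. \<bar>s\<bar> < r \<Longrightarrow> (\<integral>\<^sup>+y. exp (s * y) \<partial>P1) < \<infinity>"
    and eq: "\<And>s. \<bar>s\<bar> < r \<Longrightarrow> (\<integral>\<^sup>+y. exp (s * y) \<partial>P1) = (\<integral>\<^sup>+y. exp (s * y) \<partial>P2)"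
  shows "P1 = P2"
proof -
  define r' where "r' = r / 2"
  have r': "r' > 0" "r' < r" using r by (auto simp: r'_def)
  have fin2: "\<And>s. \<bar>s\<bar> < r \<Longrightarrow> (\<integral>\<^sup>+y. exp (s * y) \<partial>P2) < \<infinity>"
    using fin eq by simp
  have i1: "integrable P1 (\<lambda>y. exp (r' * \<bar>y\<bar>))"
    by (rule integrable_exp_abs_from_mgf[OF s1]) (use r' fin[of r'] fin[of "-r'"] in auto)
  have i2: "integrable P2 (\<lambda>y. exp (r' * \<bar>y\<bar>))"
    by (rule integrable_exp_abs_from_mgf[OF s2]) (use r' fin2[of r'] fin2[of "-r'"] in auto)
  have intexp: "integrable P (\<lambda>y. exp (s * y))"
    if "sets P = sets borel" "integrable P (\<lambda>y. exp (r' * \<bar>y\<bar>))" "\<bar>s\<bar> < r'" for P :: "real measure" and s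
  proof (rule Bochner_Integration.integrable_bound[OF that(2)])
    show "(\<lambda>y. exp (s * y)) \<in> borel_measurable P" by (simp add: measurable_cong_sets[OF that(1) refl])
    show "AE y in P. norm (exp (s * y)) \<le> norm (exp (r' * \<bar>y\<bar>))"
    proof (intro AE_I2)
      fix y
      have "s * y \<le> \<bar>s\<bar> * \<bar>y\<bar>" by (metis abs_ge_self abs_mult)
      also have "\<dots> \<le> r' * \<bar>y\<bar>" using that(3) by (intro mult_right_mono) auto
      finally show "norm (exp (s * y)) \<le> norm (exp (r' * \<bar>y\<bar>))" by simp
    qed
  qed
  have m0: "(mom P1 0 s :: real) = mom P2 0 s" if "\<bar>s\<bar> < r'" for s
  proof -
    have "ennreal (\<integral>y. exp (s * y) \<partial>P1) = (\<integral>\<^sup>+y. exp (s * y) \<partial>P1)"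
      by (rule nn_integral_eq_integral[symmetric, OF intexp[OF s1 i1 that]]) simp
    also have "\<dots> = (\<integral>\<^sup>+y. exp (s * y) \<partial>P2)" using eq that r' by simp
    also have "\<dots> = ennreal (\<integral>y. exp (s * y) \<partial>P2)"
      by (rule nn_integral_eq_integral[OF intexp[OF s2 i2 that]]) simp
    finally have "(\<integral>y. exp (s * y) \<partial>P1) = (\<integral>y. exp (s * y) \<partial>P2)"
      by (subst (asm) ennreal_inj) (auto intro!: integral_nonneg_AE)
    thus ?thesis by (simp add: mom_def mult.commute)
  qed
  have mall: "\<forall>s. \<bar>s\<bar> < r' \<longrightarrow> (mom P1 m s :: real) = mom P2 m s" for m
  proof (induction m)
    case 0 thus ?case using m0 by blast
  next
    case (Suc m)
    show ?case
    proof (intro allI impI)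
      fix s :: real assume s: "\<bar>s\<bar> < r'"
      have d1: "((\<lambda>x. mom P1 m x :: real) has_field_derivative mom P1 (Suc m) s) (at s)"
        by (rule mom_deriv[OF s1 i1 s])
      have d2: "((\<lambda>x. mom P2 m x :: real) has_field_derivative mom P2 (Suc m) s) (at s)"
        by (rule mom_deriv[OF s2 i2 s])
      have d1': "((\<lambda>x. mom P2 m x :: real) has_field_derivative mom P1 (Suc m) s) (at s)"
      proof (rule has_field_derivative_transform_within_open[OF d1])
        show "open (ball (0::real) r')" by simp
        show "s \<in> ball 0 r'" using s by simp
        fix x :: real assume "x \<in> ball 0 r'"
        thus "mom P1 m x = mom P2 m x" using Suc.IH by simp
      qed
      show "(mom P1 (Suc m) s :: real) = mom P2 (Suc m) s" by (rule DERIV_unique[OF d1' d2])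
    qed
  qed
  define Q where "Q t \<longleftrightarrow> (\<forall>m. (mom P1 m (\<i> * of_real t) :: complex) = mom P2 m (\<i> * of_real t))" for t :: real
  have momc0: "(mom P m (0::complex)) = of_real (mom P m (0::real))" for P m
  proof -
    have "(mom P m (0::complex)) = (CLINT y|P. complex_of_real (y ^ m))" by (simp add: mom_def)
    also have "\<dots> = of_real (LINT y|P. y ^ m)" by (rule integral_complex_of_real)
    finally show ?thesis by (simp add: mom_def)
  qed
  have Q0: "Q 0" unfolding Q_def using mall[of _] r' by (simp add: momc0)
  have Qstep: "Q (t + u)" if "Q t" "\<bar>u\<bar> < r'" for t u
    unfolding Q_def
  proof
    fix m
    have ser: "(\<lambda>n. (\<i> * of_real u) ^ n / fact n * mom P (n + m) (\<i> * of_real t)) sums mom P m (\<i> * of_real t + \<i> * of_real u)"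
      if "sets P = sets borel" "integrable P (\<lambda>y. exp (r' * \<bar>y\<bar>))" for P
    proof (rule mom_series[OF that, of 0])
      show "0 \<le> (0::real)" by simp
      show "0 + norm (\<i> * complex_of_real u) < r'" using \<open>\<bar>u\<bar> < r'\<close> by (simp add: norm_mult)
      fix y :: real
      have "complex_of_real y * (\<i> * complex_of_real t) = \<i> * complex_of_real (y * t)" by simp
      thus "norm (exp (complex_of_real y * (\<i> * complex_of_real t))) \<le> exp (0 * \<bar>y\<bar>)"
        by (simp only: norm_exp_i_times) simp
    qed
    have "(\<lambda>n. (\<i> * of_real u) ^ n / fact n * mom P1 (n + m) (\<i> * of_real t)) sums mom P2 m (\<i> * of_real t + \<i> * of_real u)"
      using ser[OF s2 i2] \<open>Q t\<close> unfolding Q_def by simp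
    hence "mom P1 m (\<i> * of_real t + \<i> * of_real u) = (mom P2 m (\<i> * of_real t + \<i> * of_real u) :: complex)"
      using ser[OF s1 i1] sums_unique2 by blast
    thus "(mom P1 m (\<i> * of_real (t + u)) :: complex) = mom P2 m (\<i> * of_real (t + u))"
      by (simp add: distrib_left)
  qed
  have QN: "\<forall>t. \<bar>t\<bar> \<le> real N * (r' / 2) \<longrightarrow> Q t" for N
  proof (induction N)
    case 0 thus ?case using Q0 by simp
  next
    case (Suc N)
    show ?case
    proof (intro allI impI)
      fix t :: real assume t: "\<bar>t\<bar> \<le> real (Suc N) * (r' / 2)"
      define t0 where "t0 = real N / real (Suc N) * t"
      have "\<bar>t0\<bar> = real N / real (Suc N) * \<bar>t\<bar>" by (simp add: t0_def abs_mult)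
      also have "\<dots> \<le> real N / real (Suc N) * (real (Suc N) * (r' / 2))"
        using t by (intro mult_left_mono) auto
      also have "\<dots> = real N * (r' / 2)" by simp
      finally have "Q t0" using Suc.IH by blast
      have "t - t0 = t / real (Suc N)" by (simp add: t0_def field_simps)
      hence "\<bar>t - t0\<bar> = \<bar>t\<bar> / real (Suc N)" by simp
      also have "\<dots> \<le> r' / 2" using t by (simp add: divide_le_eq mult.commute)
      also have "\<dots> < r'" using r' by simp
      finally have "Q (t0 + (t - t0))" by (intro Qstep[OF \<open>Q t0\<close>])
      thus "Q t" by simp
    qed
  qed
  have Qall: "Q t" for t
  proof -
    obtain N where "\<bar>t\<bar> / (r' / 2) \<le> real N" using real_arch_simple by blast
    hence "\<bar>t\<bar> \<le> real N * (r' / 2)" using r' by (simp add: divide_le_eq)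
    thus ?thesis using QN by blast
  qed
  have charmom: "char P t = mom P 0 (\<i> * of_real t)" for P t
    unfolding char_def mom_def by (simp add: mult_ac)
  have "char P1 = char P2"
    using Qall by (auto simp: fun_eq_iff charmom Q_def)
  moreover have "real_distribution P1" using p1 s1 by (simp add: real_distribution_def real_distribution_axioms_def)
  moreover have "real_distribution P2" using p2 s2 by (simp add: real_distribution_def real_distribution_axioms_def)
  ultimately show ?thesis using Levy_uniqueness by blast
qed


locale edf_ctx =
  fixes \<nu> :: "real \<Rightarrow> real measure" and a :: "real \<Rightarrow> real \<Rightarrow> real"
    and \<kappa> :: "real \<Rightarrow> real" and \<Theta> :: "real set"
  assumes fam: "is_EDF_family \<nu> a \<kappa> \<Theta>"
begin

definition edfw :: "real \<Rightarrow> real \<Rightarrow> real measure" where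
  "edfw \<theta> w = density (\<nu> w) (\<lambda>y. ennreal (exp (w * (y * \<theta> - \<kappa> \<theta>) + a y w)))"

lemma sets_nu: "w > 0 \<Longrightarrow> sets (\<nu> w) = sets borel"
  using fam by (simp add: is_EDF_family_def)

lemma a_meas: "w > 0 \<Longrightarrow> (\<lambda>y. a y w) \<in> borel_measurable borel"
  using fam by (simp add: is_EDF_family_def)

lemma Theta_iff: "w > 0 \<Longrightarrow> \<theta> \<in> \<Theta> \<longleftrightarrow> (\<integral>\<^sup>+ y. ennreal (exp (y * \<theta> * w + a y w)) \<partial>\<nu> w) < \<infinity>"
  using fam unfolding is_EDF_family_def by blast

lemma Theta_int: "w > 0 \<Longrightarrow> \<theta> \<in> \<Theta> \<Longrightarrow> (\<integral>\<^sup>+ y. ennreal (exp (y * \<theta> * w + a y w)) \<partial>\<nu> w) = ennreal (exp (w * \<kappa> \<theta>))"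
  using fam unfolding is_EDF_family_def by blast

lemma meas_nu: "w > 0 \<Longrightarrow> f \<in> borel_measurable borel \<Longrightarrow> f \<in> borel_measurable (\<nu> w)"
  using sets_nu by (simp add: measurable_cong_sets[OF sets_nu refl])

lemma EDF_edfw: "v > 0 \<Longrightarrow> \<phi> > 0 \<Longrightarrow> EDF \<nu> a \<kappa> \<theta> v \<phi> = edfw \<theta> (v / \<phi>)"
  unfolding EDF_def edfw_def
  by (intro arg_cong[where f="density _"] ext) (simp add: divide_divide_eq_right mult.commute)

lemma sets_edfw[simp, measurable_cong]: "w > 0 \<Longrightarrow> sets (edfw \<theta> w) = sets borel"
  by (simp add: edfw_def sets_nu)

lemma space_edfw: "w > 0 \<Longrightarrow> space (edfw \<theta> w) = UNIV"
  using sets_eq_imp_space_eq[OF sets_edfw] by simp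

lemma edfw_nn_integral:
  assumes w: "w > 0" and f: "f \<in> borel_measurable borel"
  shows "(\<integral>\<^sup>+y. f y \<partial>edfw \<theta> w) = (\<integral>\<^sup>+y. ennreal (exp (w * (y * \<theta> - \<kappa> \<theta>) + a y w)) * f y \<partial>\<nu> w)"
  unfolding edfw_def
proof (rule nn_integral_density)
  show "(\<lambda>y. ennreal (exp (w * (y * \<theta> - \<kappa> \<theta>) + a y w))) \<in> borel_measurable (\<nu> w)"
    using a_meas[OF w] by (intro meas_nu[OF w]) measurable
  show "f \<in> borel_measurable (\<nu> w)" by (rule meas_nu[OF w f])
qed

lemma edfw_mgf:
  assumes w: "w > 0" and th: "\<theta> \<in> \<Theta>" and ths: "\<theta> + s \<in> \<Theta>"
  shows "(\<integral>\<^sup>+y. ennreal (exp (w * s * y)) \<partial>edfw \<theta> w) = ennreal (exp (w * (\<kappa> (\<theta> + s) - \<kappa> \<theta>)))"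
proof -
  have "(\<integral>\<^sup>+y. ennreal (exp (w * s * y)) \<partial>edfw \<theta> w)
      = (\<integral>\<^sup>+y. ennreal (exp (w * (y * \<theta> - \<kappa> \<theta>) + a y w)) * ennreal (exp (w * s * y)) \<partial>\<nu> w)"
    by (rule edfw_nn_integral[OF w]) measurable
  also have "\<dots> = (\<integral>\<^sup>+y. ennreal (exp (- w * \<kappa> \<theta>)) * ennreal (exp (y * (\<theta> + s) * w + a y w)) \<partial>\<nu> w)"
  proof (rule nn_integral_cong)
    fix y
    have "w * (y * \<theta> - \<kappa> \<theta>) + a y w + w * s * y = - w * \<kappa> \<theta> + (y * (\<theta> + s) * w + a y w)"
      by (simp add: algebra_simps)
    thus "ennreal (exp (w * (y * \<theta> - \<kappa> \<theta>) + a y w)) * ennreal (exp (w * s * y)) =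
          ennreal (exp (- w * \<kappa> \<theta>)) * ennreal (exp (y * (\<theta> + s) * w + a y w))"
      by (simp add: ennreal_mult[symmetric] exp_add[symmetric] del: ennreal_mult)
  qed
  also have "\<dots> = ennreal (exp (- w * \<kappa> \<theta>)) * (\<integral>\<^sup>+y. ennreal (exp (y * (\<theta> + s) * w + a y w)) \<partial>\<nu> w)"
    using a_meas[OF w] by (intro nn_integral_cmult meas_nu[OF w]) measurable
  also have "\<dots> = ennreal (exp (- w * \<kappa> \<theta>)) * ennreal (exp (w * \<kappa> (\<theta> + s)))"
    by (simp add: Theta_int[OF w ths])
  also have "\<dots> = ennreal (exp (w * (\<kappa> (\<theta> + s) - \<kappa> \<theta>)))"
    by (simp add: ennreal_mult[symmetric] exp_add[symmetric] algebra_simps del: ennreal_mult)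
  finally show ?thesis .
qed

lemma prob_edfw: assumes w: "w > 0" and th: "\<theta> \<in> \<Theta>" shows "prob_space (edfw \<theta> w)"
proof
  have "emeasure (edfw \<theta> w) (space (edfw \<theta> w)) = (\<integral>\<^sup>+y. ennreal (exp (w * 0 * y)) \<partial>edfw \<theta> w)"
    by (simp add: space_edfw[OF w] nn_integral_indicator[symmetric])
  also have "\<dots> = 1" using edfw_mgf[OF w th, of 0] th by simp
  finally show "emeasure (edfw \<theta> w) (space (edfw \<theta> w)) = 1" .
qed

lemma Theta_convex:
  assumes t1: "\<theta>1 \<in> \<Theta>" and t2: "\<theta>2 \<in> \<Theta>" and "\<theta>1 \<le> \<theta>" "\<theta> \<le> \<theta>2"
  shows "\<theta> \<in> \<Theta>"
proof -
  have w: "(1::real) > 0" by simp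
  have "(\<integral>\<^sup>+ y. ennreal (exp (y * \<theta> * 1 + a y 1)) \<partial>\<nu> 1)
     \<le> (\<integral>\<^sup>+ y. ennreal (exp (y * \<theta>1 * 1 + a y 1)) + ennreal (exp (y * \<theta>2 * 1 + a y 1)) \<partial>\<nu> 1)"
  proof (rule nn_integral_mono)
    fix y
    have "y * \<theta> \<le> y * \<theta>1 \<or> y * \<theta> \<le> y * \<theta>2"
      using assms(3,4) by (cases "y \<ge> 0") (auto intro: mult_left_mono mult_left_mono_neg)
    hence "exp (y * \<theta> * 1 + a y 1) \<le> exp (y * \<theta>1 * 1 + a y 1) + exp (y * \<theta>2 * 1 + a y 1)"
      by (auto intro: add_increasing add_increasing2)
    thus "ennreal (exp (y * \<theta> * 1 + a y 1)) \<le> ennreal (exp (y * \<theta>1 * 1 + a y 1)) + ennreal (exp (y * \<theta>2 * 1 + a y 1))"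
      by (simp add: ennreal_plus[symmetric] del: ennreal_plus)
  qed
  also have "\<dots> = (\<integral>\<^sup>+ y. ennreal (exp (y * \<theta>1 * 1 + a y 1)) \<partial>\<nu> 1) + (\<integral>\<^sup>+ y. ennreal (exp (y * \<theta>2 * 1 + a y 1)) \<partial>\<nu> 1)"
    using a_meas[OF w] by (intro nn_integral_add meas_nu[OF w]; measurable)
  also have "\<dots> < \<infinity>" using Theta_iff[OF w] t1 t2 by (simp add: less_top)
  finally show ?thesis using Theta_iff[OF w] by simp
qed

lemma convex_Theta: "convex \<Theta>"
  unfolding is_interval_convex_1[symmetric] is_interval_1
proof (intro ballI allI impI)
  fix x y z assume "x \<in> \<Theta>" "y \<in> \<Theta>" "x \<le> z \<and> z \<le> y"
  thus "z \<in> \<Theta>" using Theta_convex[of x y z] by simp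
qed

lemma convex_interior_Theta: "convex (interior \<Theta>)"
  by (rule convex_interior[OF convex_Theta])

end


lemma integrable_exp_lin:
  fixes P :: "real measure"
  assumes sets: "sets P = sets borel" and int: "integrable P (\<lambda>y. exp (r * \<bar>y\<bar>))" and s: "\<bar>s\<bar> \<le> r"
  shows "integrable P (\<lambda>y. exp (s * y))"
proof (rule Bochner_Integration.integrable_bound[OF int])
  show "(\<lambda>y. exp (s * y)) \<in> borel_measurable P" by (simp add: measurable_cong_sets[OF sets refl])
  show "AE y in P. norm (exp (s * y)) \<le> norm (exp (r * \<bar>y\<bar>))"
  proof (intro AE_I2)
    fix y
    have "s * y \<le> \<bar>s\<bar> * \<bar>y\<bar>" by (metis abs_ge_self abs_mult)
    also have "\<dots> \<le> r * \<bar>y\<bar>" using s by (intro mult_right_mono) auto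
    finally show "norm (exp (s * y)) \<le> norm (exp (r * \<bar>y\<bar>))" by simp
  qed
qed

context edf_ctx
begin

lemma local_kappa:
  assumes w: "w > 0" and th0: "\<theta>0 \<in> interior \<Theta>"
  shows "(\<kappa> has_real_derivative (\<integral>y. y \<partial>edfw \<theta>0 w)) (at \<theta>0)"
    and "A1 \<nu> \<Theta> \<Longrightarrow> \<exists>D>0. (deriv \<kappa> has_real_derivative D) (at \<theta>0)"
proof -
  obtain e where e: "e > 0" "ball \<theta>0 e \<subseteq> \<Theta>" using th0 mem_interior by blast
  define P where "P = edfw \<theta>0 w"
  define R where "R = w * e / 2"
  have R: "R > 0" using w e by (simp add: R_def)
  have th0T: "\<theta>0 \<in> \<Theta>" using e by auto
  have sP: "sets P = sets borel" using w by (simp add: P_def)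
  interpret P: prob_space P unfolding P_def by (rule prob_edfw[OF w th0T])
  have mgf: "(\<integral>\<^sup>+y. ennreal (exp (s * y)) \<partial>P) = ennreal (exp (w * (\<kappa> (\<theta>0 + s / w) - \<kappa> \<theta>0)))"
    if "\<bar>s\<bar> < w * e" for s
  proof -
    have "\<theta>0 + s / w \<in> ball \<theta>0 e" using that w by (simp add: dist_real_def abs_divide divide_less_eq mult.commute)
    hence "\<theta>0 + s / w \<in> \<Theta>" using e by auto
    from edfw_mgf[OF w th0T this] show ?thesis using w by (simp add: P_def)
  qed
  have intR: "integrable P (\<lambda>y. exp (R * \<bar>y\<bar>))"
  proof (rule integrable_exp_abs_from_mgf[OF sP])
    show "0 \<le> R" using R by simp
    have "\<bar>R\<bar> < w * e" "\<bar>-R\<bar> < w * e" using R w e by (auto simp: R_def)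
    thus "(\<integral>\<^sup>+y. exp (R * y) \<partial>P) < \<infinity>" "(\<integral>\<^sup>+y. exp (- R * y) \<partial>P) < \<infinity>"
      using mgf[of R] mgf[of "-R"] by (simp_all add: less_top[symmetric])
  qed
  have mom0: "mom P 0 s = exp (w * (\<kappa> (\<theta>0 + s / w) - \<kappa> \<theta>0))" if "\<bar>s\<bar> \<le> R" for s
  proof -
    have lt: "\<bar>s\<bar> < w * e" using that R by (simp add: R_def)
    have "ennreal (\<integral>y. exp (s * y) \<partial>P) = (\<integral>\<^sup>+y. exp (s * y) \<partial>P)"
      by (rule nn_integral_eq_integral[symmetric, OF integrable_exp_lin[OF sP intR that]]) simp
    also have "\<dots> = ennreal (exp (w * (\<kappa> (\<theta>0 + s / w) - \<kappa> \<theta>0)))" by (rule mgf[OF lt])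
    finally have "(\<integral>y. exp (s * y) \<partial>P) = exp (w * (\<kappa> (\<theta>0 + s / w) - \<kappa> \<theta>0))"
      by (subst (asm) ennreal_inj) (auto intro!: integral_nonneg_AE)
    thus ?thesis by (simp add: mom_def mult.commute)
  qed
  have pos0: "mom P 0 s > (0::real)" if "\<bar>s\<bar> \<le> R" for s using mom0[OF that] by simp
  have kap: "\<kappa> x = \<kappa> \<theta>0 + ln (mom P 0 (w * (x - \<theta>0))) / w" if "\<bar>x - \<theta>0\<bar> < e / 2" for x
  proof -
    have "\<bar>w * (x - \<theta>0)\<bar> \<le> R" using that w by (simp add: R_def abs_mult)
    from mom0[OF this] w show ?thesis by simp
  qed
  have dmom: "((\<lambda>x. mom P m (w * (x - \<theta>0)) :: real) has_field_derivative mom P (Suc m) (w * (x - \<theta>0)) * w) (at x)"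
    if "\<bar>x - \<theta>0\<bar> < e / 2" for x m
  proof (rule DERIV_chain2[of "\<lambda>s. mom P m s"])
    have "\<bar>w * (x - \<theta>0)\<bar> < R" using that w by (simp add: R_def abs_mult)
    thus "((\<lambda>s. mom P m s :: real) has_field_derivative mom P (Suc m) (w * (x - \<theta>0))) (at (w * (x - \<theta>0)))"
      by (rule mom_deriv[OF sP intR])
    show "((\<lambda>x. w * (x - \<theta>0)) has_field_derivative w) (at x)"
      by (auto intro!: derivative_eq_intros)
  qed
  have inR: "\<bar>w * (x - \<theta>0)\<bar> \<le> R" if "\<bar>x - \<theta>0\<bar> < e / 2" for x
    using that w by (simp add: R_def abs_mult)
  have ball_abs: "x \<in> ball \<theta>0 (e/2) \<longleftrightarrow> \<bar>x - \<theta>0\<bar> < e / 2" for x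
    by (simp add: dist_real_def abs_minus_commute)
  have dk: "(\<kappa> has_real_derivative mom P 1 (w * (x - \<theta>0)) / mom P 0 (w * (x - \<theta>0))) (at x)"
    if x: "\<bar>x - \<theta>0\<bar> < e / 2" for x
  proof -
    have p: "mom P 0 (w * (x - \<theta>0)) > (0::real)" by (rule pos0[OF inR[OF x]])
    have "((\<lambda>x. ln (mom P 0 (w * (x - \<theta>0)))) has_field_derivative
            inverse (mom P 0 (w * (x - \<theta>0))) * (mom P (Suc 0) (w * (x - \<theta>0)) * w)) (at x)"
      by (rule DERIV_chain2[OF DERIV_ln[OF p] dmom[OF x]])
    hence "((\<lambda>x. \<kappa> \<theta>0 + ln (mom P 0 (w * (x - \<theta>0))) / w) has_field_derivative
            0 + inverse (mom P 0 (w * (x - \<theta>0))) * (mom P (Suc 0) (w * (x - \<theta>0)) * w) / w) (at x)"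
      by (intro DERIV_add DERIV_const DERIV_cdivide)
    hence "((\<lambda>x. \<kappa> \<theta>0 + ln (mom P 0 (w * (x - \<theta>0))) / w) has_field_derivative
            mom P 1 (w * (x - \<theta>0)) / mom P 0 (w * (x - \<theta>0))) (at x)"
      using w by (simp add: field_simps)
    thus ?thesis
    proof (rule has_field_derivative_transform_within_open)
      show "open (ball \<theta>0 (e/2))" by simp
      show "x \<in> ball \<theta>0 (e/2)" using x ball_abs by simp
      fix y assume "y \<in> ball \<theta>0 (e/2)"
      thus "\<kappa> \<theta>0 + ln (mom P 0 (w * (y - \<theta>0))) / w = \<kappa> y" using kap ball_abs by simp
    qed
  qed
  have m00: "mom P 0 0 = (1::real)" using mom0[of 0] R by simp
  have m10: "mom P 1 0 = (\<integral>y. y \<partial>P)" by (simp add: mom_def)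
  show "(\<kappa> has_real_derivative (\<integral>y. y \<partial>edfw \<theta>0 w)) (at \<theta>0)"
    using dk[of \<theta>0] e m00 m10 by (simp add: P_def)
  assume A1: "A1 \<nu> \<Theta>"
  define g where "g x = mom P 1 (w * (x - \<theta>0)) / mom P 0 (w * (x - \<theta>0))" for x
  have dg: "(g has_real_derivative (mom P 2 0 * w * mom P 0 0 - mom P 1 0 * (mom P 1 0 * w)) / (mom P 0 0 * mom P 0 0)) (at \<theta>0)"
  proof -
    have "(g has_real_derivative (mom P (Suc 1) (w * (\<theta>0 - \<theta>0)) * w * mom P 0 (w * (\<theta>0 - \<theta>0)) - mom P 1 (w * (\<theta>0 - \<theta>0)) * (mom P (Suc 0) (w * (\<theta>0 - \<theta>0)) * w)) / (mom P 0 (w * (\<theta>0 - \<theta>0)) * mom P 0 (w * (\<theta>0 - \<theta>0)))) (at \<theta>0)"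
      unfolding g_def using e pos0[of 0] R by (intro DERIV_divide dmom) auto
    thus ?thesis by (simp add: numeral_2_eq_2)
  qed
  have dg': "(deriv \<kappa> has_real_derivative (mom P 2 0 * w * mom P 0 0 - mom P 1 0 * (mom P 1 0 * w)) / (mom P 0 0 * mom P 0 0)) (at \<theta>0)"
  proof (rule has_field_derivative_transform_within_open[OF dg])
    show "open (ball \<theta>0 (e/2))" by simp
    show "\<theta>0 \<in> ball \<theta>0 (e/2)" using e by simp
    fix y assume "y \<in> ball \<theta>0 (e/2)"
    hence "\<bar>y - \<theta>0\<bar> < e / 2" using ball_abs by simp
    from DERIV_imp_deriv[OF dk[OF this]] show "g y = deriv \<kappa> y" by (simp add: g_def)
  qed
  define m :: real where "m = mom P 1 0"
  have intk: "integrable P (\<lambda>y. y ^ k)" for k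
  proof -
    have "integrable P (\<lambda>y. \<bar>y\<bar> ^ k * exp (0 * \<bar>y\<bar>))"
      by (rule integrable_poly_exp[OF sP intR]) (use R in auto)
    hence "integrable P (\<lambda>y. \<bar>y ^ k\<bar>)" by (simp add: power_abs)
    thus ?thesis by (subst integrable_abs_iff[symmetric]) (simp_all add: measurable_cong_sets[OF sP refl])
  qed
  have int1: "integrable P (\<lambda>y. y)" using intk[of 1] by simp
  have int2: "integrable P (\<lambda>y. y^2)" using intk[of 2] by simp
  have var: "(\<integral>y. (y - m)^2 \<partial>P) = mom P 2 0 - m^2"
  proof -
    have "(\<integral>y. (y - m)^2 \<partial>P) = (\<integral>y. y^2 - 2 * m * y + m^2 \<partial>P)"
      by (simp add: power2_diff algebra_simps)
    also have "\<dots> = (\<integral>y. y^2 \<partial>P) - (\<integral>y. 2 * m * y \<partial>P) + (\<integral>y. m^2 \<partial>P)"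
      using int1 int2 by (simp add: integral_add integral_diff)
    also have "\<dots> = mom P 2 0 - 2 * m * m + m^2"
      by (simp add: mom_def m_def P.prob_space)
    finally show ?thesis by (simp add: power2_eq_square)
  qed
  have varpos: "(\<integral>y. (y - m)^2 \<partial>P) > 0"
  proof -
    have ge: "(\<integral>y. (y - m)^2 \<partial>P) \<ge> 0" by (rule integral_nonneg_AE) simp
    have intv: "integrable P (\<lambda>y. (y - m)^2)"
      using int1 int2 by (simp add: power2_diff)
    { assume "(\<integral>y. (y - m)^2 \<partial>P) = 0"
      hence "AE y in P. (y - m)^2 = 0" using integral_nonneg_eq_0_iff_AE[OF intv] by simp
      hence "AE y in P. y = m" by simp
      hence "AE y in \<nu> w. 0 < ennreal (exp (w * (y * \<theta>0 - \<kappa> \<theta>0) + a y w)) \<longrightarrow> y = m"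
        unfolding P_def edfw_def
        by (subst (asm) AE_density) (use a_meas[OF w] in \<open>auto intro!: meas_nu[OF w]\<close>)
      hence ae: "AE y in \<nu> w. y = m" by simp
      have "emeasure (\<nu> w) (UNIV - {m}) = 0"
      proof -
        have "(AE y in \<nu> w. y = m) \<longleftrightarrow> emeasure (\<nu> w) (UNIV - {m}) = 0"
          by (rule AE_iff_measurable) (auto simp: sets_nu[OF w] sets_eq_imp_space_eq[OF sets_nu[OF w]])
        with ae show ?thesis by simp
      qed
      hence False using A1 w unfolding A1_def by blast }
    hence "(\<integral>y. (y - m)^2 \<partial>P) \<noteq> 0" by blast
    thus ?thesis using order.not_eq_order_implies_strict[OF _ ge] by metis
  qed
  have "(mom P 2 0 * w * mom P 0 0 - mom P 1 0 * (mom P 1 0 * w)) / (mom P 0 0 * mom P 0 0) = w * (mom P 2 0 - m^2)"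
    by (simp add: m00 m_def power2_eq_square algebra_simps)
  moreover have "w * (mom P 2 0 - m^2) > 0" using varpos var w by simp
  ultimately show "\<exists>D>0. (deriv \<kappa> has_real_derivative D) (at \<theta>0)" using dg' by auto
qed

end


definition upset :: "real set \<Rightarrow> bool" where
  "upset A \<longleftrightarrow> (\<forall>x\<in>A. \<forall>y. x \<le> y \<longrightarrow> y \<in> A)"

lemma upset_borel: assumes "upset A" shows "A \<in> sets borel"
proof -
  have "mono (indicator A :: real \<Rightarrow> real)"
    using assms unfolding upset_def mono_def by (auto simp: indicator_def)
  hence "(indicator A :: real \<Rightarrow> real) \<in> borel_measurable borel" by (rule borel_measurable_mono)
  thus ?thesis by (simp add: borel_measurable_indicator_iff)
qed

lemma upset_shift: "upset A \<Longrightarrow> upset {a. a + x \<in> A}"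
  unfolding upset_def by (metis add_le_cancel_right mem_Collect_eq)

lemma upset_scale: "c > 0 \<Longrightarrow> upset A \<Longrightarrow> upset {y. c * y \<in> A}"
  unfolding upset_def by (auto intro: mult_left_mono)

definition st_le :: "real measure \<Rightarrow> real measure \<Rightarrow> bool" where
  "st_le P Q \<longleftrightarrow> (\<forall>A. upset A \<longrightarrow> emeasure P A \<le> emeasure Q A)"

lemma st_le_refl: "st_le P P" by (simp add: st_le_def)

lemma conv_mono2:
  assumes "finite_measure M" "finite_measure N1" "finite_measure N2"
    and "sets M = sets borel" "sets N1 = sets borel" "sets N2 = sets borel"
    and le: "st_le N1 N2" and A: "upset A"
  shows "emeasure (M \<star> N1) A \<le> emeasure (M \<star> N2) A"
proof -
  have sp: "space M = space borel" "space N1 = space borel" "space N2 = space borel"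
    using assms(4-6) by (auto dest: sets_eq_imp_space_eq)
  have "emeasure (M \<star> N1) A = \<integral>\<^sup>+x. emeasure N1 {a. a + x \<in> A} \<partial>M"
    using assms sp by (intro convolution_emeasure upset_borel[OF A]) auto
  also have "\<dots> \<le> \<integral>\<^sup>+x. emeasure N2 {a. a + x \<in> A} \<partial>M"
    using le upset_shift[OF A] unfolding st_le_def by (intro nn_integral_mono) auto
  also have "\<dots> = emeasure (M \<star> N2) A"
    using assms sp by (intro convolution_emeasure[symmetric] upset_borel[OF A]) auto
  finally show ?thesis .
qed

lemma st_le_conv:
  assumes f: "finite_measure P1" "finite_measure P2" "finite_measure Q1" "finite_measure Q2"
    and s: "sets P1 = sets borel" "sets P2 = sets borel" "sets Q1 = sets borel" "sets Q2 = sets borel"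
    and le: "st_le P1 P2" "st_le Q1 Q2"
  shows "st_le (P1 \<star> Q1) (P2 \<star> Q2)"
  unfolding st_le_def
proof (intro allI impI)
  fix A assume A: "upset A"
  have "emeasure (P1 \<star> Q1) A \<le> emeasure (P1 \<star> Q2) A"
    by (rule conv_mono2[OF f(1,3,4) s(1,3,4) le(2) A])
  also have "(P1 \<star> Q2) = (Q2 \<star> P1)" using f s by (intro convolution_commutative) auto
  also have "emeasure (Q2 \<star> P1) A \<le> emeasure (Q2 \<star> P2) A"
    by (rule conv_mono2[OF f(4,1,2) s(4,1,2) le(1) A])
  also have "(Q2 \<star> P2) = (P2 \<star> Q2)" using f s by (intro convolution_commutative) auto
  finally show "emeasure (P1 \<star> Q1) A \<le> emeasure (P2 \<star> Q2) A" .
qed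

lemma st_le_scale:
  assumes le: "st_le P Q" and c: "c > 0" and s: "sets P = sets borel" "sets Q = sets borel"
  shows "st_le (distr P borel (\<lambda>y. c * y)) (distr Q borel (\<lambda>y. c * y))"
  unfolding st_le_def
proof (intro allI impI)
  fix A assume A: "upset A"
  have sp: "space P = UNIV" "space Q = UNIV" using s by (auto dest: sets_eq_imp_space_eq)
  have mP: "(\<lambda>y. c * y) \<in> measurable P borel" by (simp add: measurable_cong_sets[OF s(1) refl])
  have mQ: "(\<lambda>y. c * y) \<in> measurable Q borel" by (simp add: measurable_cong_sets[OF s(2) refl])
  have "emeasure (distr P borel (\<lambda>y. c * y)) A = emeasure P {y. c * y \<in> A}"
    using emeasure_distr[OF mP upset_borel[OF A]] sp by (simp add: vimage_def)
  also have "\<dots> \<le> emeasure Q {y. c * y \<in> A}"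
    using le upset_scale[OF c A] unfolding st_le_def by blast
  also have "\<dots> = emeasure (distr Q borel (\<lambda>y. c * y)) A"
    using emeasure_distr[OF mQ upset_borel[OF A]] sp by (simp add: vimage_def)
  finally show "emeasure (distr P borel (\<lambda>y. c * y)) A \<le> emeasure (distr Q borel (\<lambda>y. c * y)) A" .
qed

context edf_ctx
begin

lemma edfw_ratio:
  assumes w: "w > 0"
  shows "edfw \<theta>2 w = density (edfw \<theta>1 w) (\<lambda>y. ennreal (exp (w * y * (\<theta>2 - \<theta>1) - w * (\<kappa> \<theta>2 - \<kappa> \<theta>1))))"
proof -
  have "density (edfw \<theta>1 w) (\<lambda>y. ennreal (exp (w * y * (\<theta>2 - \<theta>1) - w * (\<kappa> \<theta>2 - \<kappa> \<theta>1))))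
      = density (\<nu> w) (\<lambda>y. ennreal (exp (w * (y * \<theta>1 - \<kappa> \<theta>1) + a y w)) * ennreal (exp (w * y * (\<theta>2 - \<theta>1) - w * (\<kappa> \<theta>2 - \<kappa> \<theta>1))))"
    unfolding edfw_def using a_meas[OF w]
    by (intro density_density_eq; intro meas_nu[OF w]; measurable)
  also have "\<dots> = edfw \<theta>2 w"
    unfolding edfw_def
  proof (intro arg_cong[where f="density _"] ext)
    fix y
    have "w * (y * \<theta>1 - \<kappa> \<theta>1) + a y w + (w * y * (\<theta>2 - \<theta>1) - w * (\<kappa> \<theta>2 - \<kappa> \<theta>1)) = w * (y * \<theta>2 - \<kappa> \<theta>2) + a y w"
      by (simp add: algebra_simps)
    thus "ennreal (exp (w * (y * \<theta>1 - \<kappa> \<theta>1) + a y w)) * ennreal (exp (w * y * (\<theta>2 - \<theta>1) - w * (\<kappa> \<theta>2 - \<kappa> \<theta>1)))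
        = ennreal (exp (w * (y * \<theta>2 - \<kappa> \<theta>2) + a y w))"
      by (simp add: ennreal_mult[symmetric] exp_add[symmetric] del: ennreal_mult)
  qed
  finally show ?thesis ..
qed

lemma mlr:
  assumes w: "w > 0" and t1: "\<theta>1 \<in> \<Theta>" and t2: "\<theta>2 \<in> \<Theta>" and le: "\<theta>1 \<le> \<theta>2"
  shows "st_le (edfw \<theta>1 w) (edfw \<theta>2 w)"
  unfolding st_le_def
proof (intro allI impI)
  fix A assume A: "upset A"
  have Ab: "A \<in> sets borel" by (rule upset_borel[OF A])
  interpret P1: prob_space "edfw \<theta>1 w" by (rule prob_edfw[OF w t1])
  interpret P2: prob_space "edfw \<theta>2 w" by (rule prob_edfw[OF w t2])
  define r where "r y = exp (w * y * (\<theta>2 - \<theta>1) - w * (\<kappa> \<theta>2 - \<kappa> \<theta>1))" for y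
  have rmono: "x \<le> y \<Longrightarrow> r x \<le> r y" for x y
    unfolding r_def using w le by (auto intro!: mult_right_mono mult_left_mono)
  have rmeas: "(\<lambda>y. ennreal (r y)) \<in> borel_measurable (edfw \<theta>1 w)"
    unfolding r_def using w by (simp add: measurable_cong_sets[OF sets_edfw[OF w] refl])
  have em2: "emeasure (edfw \<theta>2 w) B = \<integral>\<^sup>+y. ennreal (r y) * indicator B y \<partial>edfw \<theta>1 w" if "B \<in> sets borel" for B
    using that w by (subst edfw_ratio[OF w, of \<theta>2 \<theta>1]) (simp add: emeasure_density r_def measurable_cong_sets[OF sets_edfw[OF w] refl])
  have em1: "emeasure (edfw \<theta>1 w) B = \<integral>\<^sup>+y. indicator B y \<partial>edfw \<theta>1 w" if "B \<in> sets borel" for B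
    using that w by simp
  have spc: "space (edfw \<theta>1 w) = UNIV" "space (edfw \<theta>2 w) = UNIV" using space_edfw[OF w] by auto
  show "emeasure (edfw \<theta>1 w) A \<le> emeasure (edfw \<theta>2 w) A"
  proof (cases "\<forall>y\<in>A. r y \<ge> 1")
    case True
    have "emeasure (edfw \<theta>1 w) A = \<integral>\<^sup>+y. indicator A y \<partial>edfw \<theta>1 w" by (rule em1[OF Ab])
    also have "\<dots> \<le> \<integral>\<^sup>+y. ennreal (r y) * indicator A y \<partial>edfw \<theta>1 w"
      using True by (intro nn_integral_mono) (auto simp: indicator_def)
    also have "\<dots> = emeasure (edfw \<theta>2 w) A" by (rule em2[OF Ab, symmetric])
    finally show ?thesis .
  next
    case False
    then obtain a0 where a0: "a0 \<in> A" "r a0 < 1" by (auto simp: not_le)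
    have B: "-A \<in> sets borel" using Ab by auto
    have ltB: "y \<in> -A \<Longrightarrow> r y \<le> 1" for y
    proof -
      assume "y \<in> -A"
      hence "y < a0" using A a0 unfolding upset_def by (metis ComplD linorder_not_le)
      thus "r y \<le> 1" using rmono[of y a0] a0 by simp
    qed
    have "emeasure (edfw \<theta>2 w) (-A) = \<integral>\<^sup>+y. ennreal (r y) * indicator (-A) y \<partial>edfw \<theta>1 w" by (rule em2[OF B])
    also have "\<dots> \<le> \<integral>\<^sup>+y. indicator (-A) y \<partial>edfw \<theta>1 w"
      using ltB by (intro nn_integral_mono) (auto simp: indicator_def)
    also have "\<dots> = emeasure (edfw \<theta>1 w) (-A)" by (rule em1[OF B, symmetric])
    finally have "P2.prob (-A) \<le> P1.prob (-A)"
      by (simp add: P1.emeasure_eq_measure P2.emeasure_eq_measure)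
    moreover have "P2.prob (-A) = 1 - P2.prob A" "P1.prob (-A) = 1 - P1.prob A"
      using P1.prob_compl[of A] P2.prob_compl[of A] Ab w spc by (auto simp: Compl_eq_Diff_UNIV)
    ultimately have "P1.prob A \<le> P2.prob A" by simp
    thus ?thesis by (simp add: P1.emeasure_eq_measure P2.emeasure_eq_measure)
  qed
qed

definition Dw :: "real \<Rightarrow> real \<Rightarrow> real measure" where
  "Dw \<theta> w = distr (edfw \<theta> w) borel (\<lambda>y. w * y)"

lemma sets_Dw[simp, measurable_cong]: "sets (Dw \<theta> w) = sets borel"
  by (simp add: Dw_def)

lemma prob_Dw: "w > 0 \<Longrightarrow> \<theta> \<in> \<Theta> \<Longrightarrow> prob_space (Dw \<theta> w)"
  unfolding Dw_def
  by (rule prob_space.prob_space_distr[OF prob_edfw]) (simp_all add: measurable_cong_sets[OF sets_edfw refl])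

lemma st_le_Dw:
  assumes w: "w > 0" and "\<theta>1 \<in> \<Theta>" "\<theta>2 \<in> \<Theta>" "\<theta>1 \<le> \<theta>2"
  shows "st_le (Dw \<theta>1 w) (Dw \<theta>2 w)"
  unfolding Dw_def using assms by (intro st_le_scale mlr) auto

lemma Dw_mgf:
  assumes w: "w > 0" and th: "\<theta> \<in> \<Theta>" and ths: "\<theta> + s \<in> \<Theta>"
  shows "(\<integral>\<^sup>+x. ennreal (exp (s * x)) \<partial>Dw \<theta> w) = ennreal (exp (w * (\<kappa> (\<theta> + s) - \<kappa> \<theta>)))"
proof -
  have "(\<integral>\<^sup>+x. ennreal (exp (s * x)) \<partial>Dw \<theta> w) = (\<integral>\<^sup>+y. ennreal (exp (s * (w * y))) \<partial>edfw \<theta> w)"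
    unfolding Dw_def using w by (subst nn_integral_distr) (simp_all add: measurable_cong_sets[OF sets_edfw refl])
  also have "\<dots> = (\<integral>\<^sup>+y. ennreal (exp (w * s * y)) \<partial>edfw \<theta> w)" by (simp add: mult_ac)
  also have "\<dots> = ennreal (exp (w * (\<kappa> (\<theta> + s) - \<kappa> \<theta>)))" by (rule edfw_mgf[OF w th ths])
  finally show ?thesis .
qed

lemma mgf_conv:
  assumes "finite_measure M" "finite_measure N" "sets M = sets borel" "sets N = sets borel"
  shows "(\<integral>\<^sup>+x. ennreal (exp (s * x)) \<partial>(M \<star> N)) = (\<integral>\<^sup>+x. ennreal (exp (s * x)) \<partial>M) * (\<integral>\<^sup>+x. ennreal (exp (s * x)) \<partial>N)"
proof -
  have mM: "\<And>f. f \<in> borel_measurable borel \<Longrightarrow> f \<in> borel_measurable M" using assms(3) by (simp add: measurable_cong_sets[OF assms(3) refl])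
  have mN: "\<And>f. f \<in> borel_measurable borel \<Longrightarrow> f \<in> borel_measurable N" using assms(4) by (simp add: measurable_cong_sets[OF assms(4) refl])
  have "(\<integral>\<^sup>+x. ennreal (exp (s * x)) \<partial>(M \<star> N)) = (\<integral>\<^sup>+x. \<integral>\<^sup>+y. ennreal (exp (s * (x + y))) \<partial>N \<partial>M)"
    using assms by (subst nn_integral_convolution) auto
  also have "\<dots> = (\<integral>\<^sup>+x. ennreal (exp (s * x)) * (\<integral>\<^sup>+y. ennreal (exp (s * y)) \<partial>N) \<partial>M)"
  proof (rule nn_integral_cong)
    fix x
    have "(\<integral>\<^sup>+y. ennreal (exp (s * (x + y))) \<partial>N) = (\<integral>\<^sup>+y. ennreal (exp (s * x)) * ennreal (exp (s * y)) \<partial>N)"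
      by (simp add: distrib_left exp_add ennreal_mult)
    also have "\<dots> = ennreal (exp (s * x)) * (\<integral>\<^sup>+y. ennreal (exp (s * y)) \<partial>N)"
      by (rule nn_integral_cmult) (intro mN; measurable)
    finally show "(\<integral>\<^sup>+y. ennreal (exp (s * (x + y))) \<partial>N) = ennreal (exp (s * x)) * (\<integral>\<^sup>+y. ennreal (exp (s * y)) \<partial>N)" .
  qed
  also have "\<dots> = (\<integral>\<^sup>+x. ennreal (exp (s * x)) \<partial>M) * (\<integral>\<^sup>+y. ennreal (exp (s * y)) \<partial>N)"
    by (rule nn_integral_multc) (intro mM; measurable)
  finally show ?thesis .
qed

lemma prob_conv:
  assumes "prob_space M" "prob_space N" "sets M = sets borel" "sets N = sets borel"
  shows "prob_space (M \<star> N)"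
proof -
  interpret M: prob_space M by fact
  interpret N: prob_space N by fact
  interpret MN: pair_prob_space M N ..
  show ?thesis unfolding convolution_def
    by (rule MN.prob_space_distr) (simp add: measurable_cong_sets[OF sets_pair_measure_cong[OF assms(3,4)] refl])
qed

lemma Dw_conv:
  assumes w1: "w1 > 0" and w2: "w2 > 0" and th: "\<theta> \<in> interior \<Theta>"
  shows "(Dw \<theta> w1 \<star> Dw \<theta> w2) = Dw \<theta> (w1 + w2)"
proof -
  obtain e where e: "e > 0" "ball \<theta> e \<subseteq> \<Theta>" using th mem_interior by blast
  have thT: "\<theta> \<in> \<Theta>" using e by auto
  have w12: "w1 + w2 > 0" using w1 w2 by simp
  have p1: "prob_space (Dw \<theta> w1)" by (rule prob_Dw[OF w1 thT])
  have p2: "prob_space (Dw \<theta> w2)" by (rule prob_Dw[OF w2 thT])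
  have p12: "prob_space (Dw \<theta> (w1 + w2))" by (rule prob_Dw[OF w12 thT])
  have ins: "\<theta> + s \<in> \<Theta>" if "\<bar>s\<bar> < e" for s
    using that e by (auto simp: dist_real_def)
  show ?thesis
  proof (rule mgf_unique[OF prob_conv[OF p1 p2] p12 _ _ e(1)])
    fix s :: real assume s: "\<bar>s\<bar> < e"
    have "(\<integral>\<^sup>+x. ennreal (exp (s * x)) \<partial>(Dw \<theta> w1 \<star> Dw \<theta> w2))
        = ennreal (exp (w1 * (\<kappa> (\<theta> + s) - \<kappa> \<theta>))) * ennreal (exp (w2 * (\<kappa> (\<theta> + s) - \<kappa> \<theta>)))"
      using p1 p2 by (simp add: mgf_conv prob_space.finite_measure Dw_mgf[OF w1 thT ins[OF s]] Dw_mgf[OF w2 thT ins[OF s]])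
    also have "\<dots> = ennreal (exp ((w1 + w2) * (\<kappa> (\<theta> + s) - \<kappa> \<theta>)))"
      by (simp add: ennreal_mult[symmetric] exp_add[symmetric] distrib_right del: ennreal_mult)
    also have "\<dots> = (\<integral>\<^sup>+x. ennreal (exp (s * x)) \<partial>Dw \<theta> (w1 + w2))"
      by (rule Dw_mgf[OF w12 thT ins[OF s], symmetric])
    finally show "(\<integral>\<^sup>+x. ennreal (exp (s * x)) \<partial>(Dw \<theta> w1 \<star> Dw \<theta> w2)) = (\<integral>\<^sup>+x. ennreal (exp (s * x)) \<partial>Dw \<theta> (w1 + w2))" .
    thus "(\<integral>\<^sup>+x. ennreal (exp (s * x)) \<partial>(Dw \<theta> w1 \<star> Dw \<theta> w2)) < \<infinity>"
      using Dw_mgf[OF w12 thT ins[OF s]] by simp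
  qed simp_all
qed

end


lemma quantile_lower:
  fixes P :: "real measure"
  assumes P: "prob_space P" and sP: "sets P = sets borel" and d: "0 < \<delta>" "\<delta> < 1"
  shows "measure P {y. 1 - \<delta> < measure P {..<y}} \<le> \<delta>"
proof -
  interpret prob_space P by (rule P)
  have spP: "space P = UNIV" using sets_eq_imp_space_eq[OF sP] by simp
  have ev: "A \<in> sets P" if "A \<in> sets borel" for A using that sP by simp
  define F where "F y = measure P {..<y}" for y
  have Fmono: "F x \<le> F y" if "x \<le> y" for x y
    unfolding F_def using that by (intro finite_measure_mono) (auto simp: sP)
  define U where "U = {y. 1 - \<delta> < F y}"
  have upU: "upset U" unfolding upset_def U_def
  proof (intro ballI allI impI)
    fix x y assume "x \<in> {y. 1 - \<delta> < F y}" "x \<le> y"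
    thus "y \<in> {y. 1 - \<delta> < F y}" using Fmono[of x y] by simp
  qed
  show ?thesis
  proof (cases "U = {}")
    case True thus ?thesis using d by (simp add: U_def F_def)
  next
    case False
    have bdd: "bdd_below U"
    proof (rule ccontr)
      assume nb: "\<not> bdd_below U"
      have inU: "- real n \<in> U" for n
      proof -
        from nb obtain y where "y \<in> U" "y < - real n" unfolding bdd_below_def by (meson not_le)
        thus ?thesis using upU unfolding upset_def by auto
      qed
      have "(\<lambda>n. measure P {..< - real n}) \<longlonglongrightarrow> measure P (\<Inter>n. {..< - real n})"
        by (rule finite_Lim_measure_decseq) (auto simp: sP decseq_def)
      moreover have "(\<Inter>n. {..< - real n}) = ({} :: real set)"
      proof -
        { fix y :: real obtain n where "- y < real n" using reals_Archimedean2 by blast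
          hence "\<not> y < - real n" by simp
          hence "y \<notin> (\<Inter>n. {..< - real n})" by blast }
        thus ?thesis by blast
      qed
      ultimately have "(\<lambda>n. F (- real n)) \<longlonglongrightarrow> 0" by (simp add: F_def)
      moreover have "\<forall>n\<ge>0. 1 - \<delta> \<le> F (- real n)" using inU by (auto simp: U_def less_imp_le)
      ultimately have "1 - \<delta> \<le> 0" by (intro LIMSEQ_le_const) auto
      thus False using d by simp
    qed
    define t where "t = Inf U"
    have tle: "t \<le> y" if "y \<in> U" for y unfolding t_def by (rule cInf_lower[OF that bdd])
    have tnot: "t \<notin> U"
    proof
      assume tU: "t \<in> U"
      have "(\<lambda>n. measure P {..< t - inverse (real (Suc n))}) \<longlonglongrightarrow> measure P (\<Union>n. {..< t - inverse (real (Suc n))})"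
      proof (rule finite_Lim_measure_incseq)
        show "range (\<lambda>n. {..< t - inverse (real (Suc n))}) \<subseteq> sets P" by (auto simp: sP)
        show "incseq (\<lambda>n. {..< t - inverse (real (Suc n))})"
          unfolding incseq_def by (auto simp: field_simps)
      qed
      moreover have "(\<Union>n. {..< t - inverse (real (Suc n))}) = {..<t}"
      proof (intro equalityI subsetI)
        fix y assume "y \<in> (\<Union>n. {..< t - inverse (real (Suc n))})"
        then obtain n where "y < t - inverse (real (Suc n))" by auto
        moreover have "inverse (real (Suc n)) > 0" by (simp del: of_nat_Suc)
        ultimately have "y < t" by linarith
        thus "y \<in> {..<t}" by simp
      next
        fix y assume "y \<in> {..<t}"
        then obtain n where "inverse (real (Suc n)) < t - y" using reals_Archimedean[of "t - y"] by auto
        hence "y < t - inverse (real (Suc n))" by linarith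
        thus "y \<in> (\<Union>n. {..< t - inverse (real (Suc n))})" by blast
      qed
      ultimately have lim: "(\<lambda>n. F (t - inverse (real (Suc n)))) \<longlonglongrightarrow> F t" by (simp add: F_def)
      have "1 - \<delta> < F t" using tU by (simp add: U_def)
      from order_tendstoD(1)[OF lim this] obtain n where "1 - \<delta> < F (t - inverse (real (Suc n)))"
        by (auto simp: eventually_sequentially)
      hence "t - inverse (real (Suc n)) \<in> U" by (simp add: U_def)
      from tle[OF this] show False by simp
    qed
    have Usub: "U \<subseteq> {t<..}" using tle tnot by (force simp: less_le)
    have ge: "1 - \<delta> \<le> measure P {..t}"
    proof -
      have "(\<lambda>n. measure P {..< t + inverse (real (Suc n))}) \<longlonglongrightarrow> measure P (\<Inter>n. {..< t + inverse (real (Suc n))})"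
      proof (rule finite_Lim_measure_decseq)
        show "range (\<lambda>n. {..< t + inverse (real (Suc n))}) \<subseteq> sets P" by (auto simp: sP)
        show "decseq (\<lambda>n. {..< t + inverse (real (Suc n))})"
          unfolding decseq_def by (auto simp: field_simps)
      qed
      moreover have "(\<Inter>n. {..< t + inverse (real (Suc n))}) = {..t}"
      proof (intro equalityI subsetI)
        fix y assume y: "y \<in> (\<Inter>n. {..< t + inverse (real (Suc n))})"
        show "y \<in> {..t}"
        proof (rule ccontr)
          assume "y \<notin> {..t}"
          hence "0 < y - t" by simp
          then obtain n where "inverse (real (Suc n)) < y - t" using reals_Archimedean by blast
          moreover have "y < t + inverse (real (Suc n))" using y by blast
          ultimately show False by linarith
        qed
      next
        fix y assume "y \<in> {..t}"
        moreover have "inverse (real (Suc n)) > 0" for n by (simp del: of_nat_Suc)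
        ultimately have "y < t + inverse (real (Suc n))" for n by (metis atMost_iff add.commute less_add_same_cancel2 order_le_less_trans)
        thus "y \<in> (\<Inter>n. {..< t + inverse (real (Suc n))})" by blast
      qed
      ultimately have lim: "(\<lambda>n. F (t + inverse (real (Suc n)))) \<longlonglongrightarrow> measure P {..t}" by (simp add: F_def)
      have "1 - \<delta> \<le> F (t + inverse (real (Suc n)))" for n
      proof -
        have "t < t + inverse (real (Suc n))" by simp
        then obtain u where "u \<in> U" "u < t + inverse (real (Suc n))"
          using cInf_less_iff[OF False bdd] unfolding t_def by blast
        hence "t + inverse (real (Suc n)) \<in> U" using upU unfolding upset_def by auto
        thus ?thesis by (simp add: U_def)
      qed
      thus ?thesis by (intro LIMSEQ_le_const[OF lim]) auto
    qed
    have "measure P U \<le> measure P {t<..}"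
      using Usub by (intro finite_measure_mono) (auto simp: sP)
    also have "{t<..} = space P - {..t}" using spP by auto
    also have "measure P (space P - {..t}) = 1 - measure P {..t}" by (rule prob_compl) (simp add: sP)
    also have "\<dots> \<le> \<delta>" using ge by simp
    finally show ?thesis by (simp add: U_def F_def)
  qed
qed

lemma quantile_upper:
  fixes P :: "real measure"
  assumes P: "prob_space P" and sP: "sets P = sets borel" and d: "0 < \<delta>" "\<delta> < 1"
  shows "measure P {y. measure P {..y} < \<delta>} \<le> \<delta>"
proof -
  interpret prob_space P by (rule P)
  have spP: "space P = UNIV" using sets_eq_imp_space_eq[OF sP] by simp
  define Q where "Q = distr P borel uminus"
  have mu: "(uminus :: real \<Rightarrow> real) \<in> measurable P borel" by (simp add: measurable_cong_sets[OF sP refl])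
  have pQ: "prob_space Q" unfolding Q_def by (rule prob_space_distr[OF mu])
  have sQ: "sets Q = sets borel" by (simp add: Q_def)
  have Qm: "measure Q A = measure P {y. - y \<in> A}" if "A \<in> sets borel" for A
    unfolding Q_def using measure_distr[OF mu that] spP by (simp add: vimage_def)
  have Qlt: "measure Q {..<z} = 1 - measure P {..-z}" for z
  proof -
    have "measure Q {..<z} = measure P {y. - y < z}" by (simp add: Qm)
    also have "{y. - y < z} = space P - {..-z}" using spP by auto
    also have "measure P (space P - {..-z}) = 1 - measure P {..-z}" by (rule prob_compl) (simp add: sP)
    finally show ?thesis .
  qed
  have Fmono: "measure P {..x} \<le> measure P {..y}" if "x \<le> y" for x y
    using that by (intro finite_measure_mono) (auto simp: sP)
  define V where "V = {z. measure P {..-z} < \<delta>}"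
  have "upset V" unfolding upset_def V_def
  proof (intro ballI allI impI)
    fix x y assume "x \<in> {z. measure P {..-z} < \<delta>}" "x \<le> y"
    thus "y \<in> {z. measure P {..-z} < \<delta>}" using Fmono[of "-y" "-x"] by simp
  qed
  hence Vb: "V \<in> sets borel" by (rule upset_borel)
  have "{z. 1 - \<delta> < measure Q {..<z}} = V" by (auto simp: Qlt V_def)
  hence "measure Q V \<le> \<delta>" using quantile_lower[OF pQ sQ d] by simp
  moreover have "measure Q V = measure P {y. measure P {..y} < \<delta>}"
  proof -
    have "measure Q V = measure P {y. - y \<in> V}" by (rule Qm[OF Vb])
    also have "{y. - y \<in> V} = {y. measure P {..y} < \<delta>}" by (simp add: V_def)
    finally show ?thesis .
  qed
  ultimately show ?thesis by simp
qed

lemma inf_conv_anti: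
  assumes "S1 \<subseteq> S2" "S2 \<subseteq> ereal ` M"
  shows "inf_conv M S2 \<le> inf_conv M S1"
proof (cases "S1 = {}")
  case True
  show ?thesis
  proof (cases "S2 = {}")
    case True thus ?thesis using \<open>S1 = {}\<close> by (simp add: inf_conv_def)
  next
    case False
    then obtain x where x: "x \<in> S2" by blast
    have "Inf S2 \<le> x" by (rule Inf_lower[OF x])
    also have "x \<le> Sup (ereal ` M)" using x assms(2) by (auto intro: Sup_upper)
    finally show ?thesis using True False by (simp add: inf_conv_def)
  qed
next
  case False
  hence "S2 \<noteq> {}" using assms by auto
  thus ?thesis using False assms by (simp add: inf_conv_def Inf_superset_mono)
qed

lemma sup_conv_mono:
  assumes "S1 \<subseteq> S2" "S2 \<subseteq> ereal ` M"
  shows "sup_conv M S1 \<le> sup_conv M S2"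
proof (cases "S1 = {}")
  case True
  show ?thesis
  proof (cases "S2 = {}")
    case True thus ?thesis using \<open>S1 = {}\<close> by (simp add: sup_conv_def)
  next
    case False
    then obtain x where x: "x \<in> S2" by blast
    have "Inf (ereal ` M) \<le> x" using x assms(2) by (auto intro: Inf_lower)
    also have "x \<le> Sup S2" by (rule Sup_upper[OF x])
    finally show ?thesis using True False by (simp add: sup_conv_def)
  qed
next
  case False
  hence "S2 \<noteq> {}" using assms by auto
  thus ?thesis using False assms by (simp add: sup_conv_def Sup_subset_mono)
qed

context edf_ctx
begin

lemma deriv_kappa_mean: "w > 0 \<Longrightarrow> \<theta> \<in> interior \<Theta> \<Longrightarrow> deriv \<kappa> \<theta> = (\<integral>y. y \<partial>edfw \<theta> w)"
  by (rule DERIV_imp_deriv[OF local_kappa(1)])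

lemma interior_between:
  assumes "\<theta>1 \<in> interior \<Theta>" "\<theta>2 \<in> interior \<Theta>" "\<theta>1 \<le> x" "x \<le> \<theta>2"
  shows "x \<in> interior \<Theta>"
  using convex_interior_Theta assms unfolding is_interval_convex_1[symmetric] is_interval_1 by blast

lemma deriv_kappa_strict:
  assumes A1: "A1 \<nu> \<Theta>" and "\<theta>1 \<in> interior \<Theta>" "\<theta>2 \<in> interior \<Theta>" "\<theta>1 < \<theta>2"
  shows "deriv \<kappa> \<theta>1 < deriv \<kappa> \<theta>2"
proof (rule DERIV_pos_imp_increasing[OF assms(4)])
  fix x assume "\<theta>1 \<le> x" "x \<le> \<theta>2"
  hence "x \<in> interior \<Theta>" using interior_between assms by blast
  from local_kappa(2)[of 1 x, OF _ this A1] show "\<exists>y. (deriv \<kappa> has_real_derivative y) (at x) \<and> 0 < y" by auto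
qed

lemma deriv_kappa_mono:
  assumes A1: "A1 \<nu> \<Theta>" and "\<theta>1 \<in> interior \<Theta>" "\<theta>2 \<in> interior \<Theta>" "\<theta>1 \<le> \<theta>2"
  shows "deriv \<kappa> \<theta>1 \<le> deriv \<kappa> \<theta>2"
  using deriv_kappa_strict[OF assms(1-3)] assms(4) by (cases "\<theta>1 = \<theta>2") auto

lemma inj_deriv_kappa: assumes A1: "A1 \<nu> \<Theta>" shows "inj_on (deriv \<kappa>) (interior \<Theta>)"
proof (rule inj_onI)
  fix x y assume "x \<in> interior \<Theta>" "y \<in> interior \<Theta>" "deriv \<kappa> x = deriv \<kappa> y"
  thus "x = y" using deriv_kappa_strict[OF A1, of x y] deriv_kappa_strict[OF A1, of y x]
    by (cases x y rule: linorder_cases) auto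
qed

lemma link_h_eq: "A1 \<nu> \<Theta> \<Longrightarrow> \<theta> \<in> interior \<Theta> \<Longrightarrow> link_h \<kappa> \<Theta> (deriv \<kappa> \<theta>) = \<theta>"
  unfolding link_h_def by (rule the_inv_into_f_f[OF inj_deriv_kappa])

lemma link_h_in: "A1 \<nu> \<Theta> \<Longrightarrow> \<mu> \<in> mean_space \<kappa> \<Theta> \<Longrightarrow> link_h \<kappa> \<Theta> \<mu> \<in> interior \<Theta>"
  unfolding link_h_def mean_space_def by (rule the_inv_into_into[OF inj_deriv_kappa]) auto

end


lemma borel_measurable_mono_ereal:
  fixes g :: "real \<Rightarrow> ereal" assumes "mono g" shows "g \<in> borel_measurable borel"
proof (rule borel_measurableI_greater)
  fix c
  have "upset {x. c < g x}" unfolding upset_def using assms by (auto simp: mono_def intro: less_le_trans)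
  thus "{x \<in> space borel. c < g x} \<in> sets borel" using upset_borel by simp
qed

context edf_ctx
begin

lemma law_scaled:
  assumes phi: "\<phi> > 0" and v: "v > 0" and Ym: "Y \<in> borel_measurable M"
    and d: "distr M borel Y = EDF \<nu> a \<kappa> \<theta> v \<phi>"
  shows "distr M borel (\<lambda>\<omega>. (v / \<phi>) * Y \<omega>) = Dw \<theta> (v / \<phi>)"
proof -
  have "Dw \<theta> (v / \<phi>) = distr (distr M borel Y) borel (\<lambda>y. (v / \<phi>) * y)"
    unfolding Dw_def d EDF_edfw[OF v phi] ..
  also have "\<dots> = distr M borel ((\<lambda>y. (v / \<phi>) * y) \<circ> Y)"
    by (rule distr_distr) (simp_all add: Ym)
  finally show ?thesis by (simp add: comp_def)
qed

lemma sum_law: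
  fixes R :: "real measure \<Rightarrow> real measure \<Rightarrow> bool" and Y :: "nat \<Rightarrow> 'b \<Rightarrow> real"
  assumes M: "prob_space M" and ind: "prob_space.indep_vars M (\<lambda>_. borel) Y I0"
    and fin: "finite I" "I \<noteq> {}" "I \<subseteq> I0"
    and w: "\<forall>i\<in>I. w i > 0" and ts: "ts \<in> interior \<Theta>"
    and law: "\<forall>i\<in>I. distr M borel (\<lambda>\<omega>. w i * Y i \<omega>) = Dw (\<theta> i) (w i)"
    and thT: "\<forall>i\<in>I. \<theta> i \<in> \<Theta>"
    and base: "\<forall>i\<in>I. R (Dw (\<theta> i) (w i)) (Dw ts (w i))"
    and Rconv: "\<And>P1 P2 Q1 Q2. prob_space P1 \<Longrightarrow> prob_space P2 \<Longrightarrow> prob_space Q1 \<Longrightarrow> prob_space Q2 \<Longrightarrow>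
       sets P1 = sets borel \<Longrightarrow> sets P2 = sets borel \<Longrightarrow> sets Q1 = sets borel \<Longrightarrow> sets Q2 = sets borel \<Longrightarrow>
       R P1 P2 \<Longrightarrow> R Q1 Q2 \<Longrightarrow> R (P1 \<star> Q1) (P2 \<star> Q2)"
  shows "R (distr M borel (\<lambda>\<omega>. \<Sum>i\<in>I. w i * Y i \<omega>)) (Dw ts (\<Sum>i\<in>I. w i))"
  using fin w law thT base
proof (induction I rule: finite_ne_induct)
  case (singleton i) thus ?case by simp
next
  case (insert i I)
  interpret M: prob_space M by (rule M)
  have tsT: "ts \<in> \<Theta>" using ts interior_subset by blast
  have Ym: "Y j \<in> borel_measurable M" if "j \<in> I0" for j
    using ind that unfolding M.indep_vars_def by auto
  define X where "X j \<omega> = w j * Y j \<omega>" for j \<omega>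
  have Xm: "X j \<in> borel_measurable M" if "j \<in> I0" for j unfolding X_def using Ym[OF that] by measurable
  have indX: "M.indep_vars (\<lambda>_. borel) X (insert i I)"
    unfolding X_def
    by (rule M.indep_vars_compose2[OF M.indep_vars_subset[OF ind insert.prems(1)]]) simp
  have iv: "M.indep_var borel (X i) borel (\<lambda>\<omega>. \<Sum>j\<in>I. X j \<omega>)"
    by (rule M.indep_vars_sum[OF insert.hyps(1,3) indX])
  have Sm: "(\<lambda>\<omega>. \<Sum>j\<in>I. X j \<omega>) \<in> borel_measurable M"
    using Xm insert.prems(1) by (intro borel_measurable_sum) auto
  have "distr M borel (\<lambda>\<omega>. \<Sum>j\<in>insert i I. w j * Y j \<omega>) = distr M borel (\<lambda>\<omega>. X i \<omega> + (\<Sum>j\<in>I. X j \<omega>))"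
    using insert.hyps by (simp add: X_def)
  also have "\<dots> = (distr M borel (X i) \<star> distr M borel (\<lambda>\<omega>. \<Sum>j\<in>I. X j \<omega>))"
    by (rule M.sum_indep_random_variable[OF iv]) (use Xm insert.prems(1) Sm in auto)
  finally have eq0: "distr M borel (\<lambda>\<omega>. \<Sum>j\<in>insert i I. w j * Y j \<omega>) = (distr M borel (X i) \<star> distr M borel (\<lambda>\<omega>. \<Sum>j\<in>I. X j \<omega>))" .
  have eq1: "distr M borel (\<lambda>\<omega>. \<Sum>j\<in>insert i I. w j * Y j \<omega>) = (Dw (\<theta> i) (w i) \<star> distr M borel (\<lambda>\<omega>. \<Sum>j\<in>I. w j * Y j \<omega>))"
  proof -
    have "X i = (\<lambda>\<omega>. w i * Y i \<omega>)" by (simp add: X_def fun_eq_iff)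
    thus ?thesis using insert.prems(3) eq0 by (simp add: X_def)
  qed
  have IH: "R (distr M borel (\<lambda>\<omega>. \<Sum>j\<in>I. w j * Y j \<omega>)) (Dw ts (\<Sum>j\<in>I. w j))"
    using insert.prems by (intro insert.IH) auto
  have wi: "w i > 0" using insert.prems by simp
  have WI: "(\<Sum>j\<in>I. w j) > 0" using insert.prems insert.hyps by (intro sum_pos) auto
  have pS: "prob_space (distr M borel (\<lambda>\<omega>. \<Sum>j\<in>I. w j * Y j \<omega>))"
    using Sm by (intro M.prob_space_distr) (simp add: X_def)
  have "R (Dw (\<theta> i) (w i) \<star> distr M borel (\<lambda>\<omega>. \<Sum>j\<in>I. w j * Y j \<omega>)) (Dw ts (w i) \<star> Dw ts (\<Sum>j\<in>I. w j))"
  proof (rule Rconv)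
    show "prob_space (Dw (\<theta> i) (w i))" using insert.prems wi by (intro prob_Dw) auto
    show "prob_space (Dw ts (w i))" using tsT wi by (intro prob_Dw) auto
    show "prob_space (Dw ts (\<Sum>j\<in>I. w j))" using tsT WI by (intro prob_Dw) auto
    show "R (Dw (\<theta> i) (w i)) (Dw ts (w i))" using insert.prems by simp
  qed (use pS IH in auto)
  also have "(Dw ts (w i) \<star> Dw ts (\<Sum>j\<in>I. w j)) = Dw ts (w i + (\<Sum>j\<in>I. w j))"
    by (rule Dw_conv[OF wi WI ts])
  finally show ?case using eq1 insert.hyps by simp
qed

end


context edf_ctx
begin

lemma EDF_prob_at_mean:
  assumes A1: "A1 \<nu> \<Theta>" and V: "V > 0" and phi: "\<phi> > 0" and mu: "\<mu> \<in> mean_space \<kappa> \<Theta>"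
  shows "prob_space (EDF \<nu> a \<kappa> (link_h \<kappa> \<Theta> \<mu>) V \<phi>)" "sets (EDF \<nu> a \<kappa> (link_h \<kappa> \<Theta> \<mu>) V \<phi>) = sets borel"
proof -
  have "link_h \<kappa> \<Theta> \<mu> \<in> \<Theta>" using link_h_in[OF A1 mu] interior_subset by blast
  thus "prob_space (EDF \<nu> a \<kappa> (link_h \<kappa> \<Theta> \<mu>) V \<phi>)" using V phi by (simp add: EDF_edfw prob_edfw)
  show "sets (EDF \<nu> a \<kappa> (link_h \<kappa> \<Theta> \<mu>) V \<phi>) = sets borel" using V phi by (simp add: EDF_edfw)
qed

lemma Fstar_mono:
  assumes A1: "A1 \<nu> \<Theta>" and V: "V > 0" and phi: "\<phi> > 0" and mu: "\<mu> \<in> mean_space \<kappa> \<Theta>" and y: "y1 \<le> y2"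
  shows "edf_Fstar \<nu> a \<kappa> \<Theta> y1 \<mu> V \<phi> \<le> edf_Fstar \<nu> a \<kappa> \<Theta> y2 \<mu> V \<phi>"
proof -
  interpret P: prob_space "EDF \<nu> a \<kappa> (link_h \<kappa> \<Theta> \<mu>) V \<phi>" by (rule EDF_prob_at_mean[OF A1 V phi mu])
  show ?thesis unfolding edf_Fstar_def using y EDF_prob_at_mean(2)[OF A1 V phi mu]
    by (intro P.finite_measure_mono) auto
qed

lemma F_mono:
  assumes A1: "A1 \<nu> \<Theta>" and V: "V > 0" and phi: "\<phi> > 0" and mu: "\<mu> \<in> mean_space \<kappa> \<Theta>" and y: "y1 \<le> y2"
  shows "edf_F \<nu> a \<kappa> \<Theta> y1 \<mu> V \<phi> \<le> edf_F \<nu> a \<kappa> \<Theta> y2 \<mu> V \<phi>"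
proof -
  interpret P: prob_space "EDF \<nu> a \<kappa> (link_h \<kappa> \<Theta> \<mu>) V \<phi>" by (rule EDF_prob_at_mean[OF A1 V phi mu])
  show ?thesis unfolding edf_F_def using y EDF_prob_at_mean(2)[OF A1 V phi mu]
    by (intro P.finite_measure_mono) auto
qed

lemma l_mono:
  assumes A1: "A1 \<nu> \<Theta>" and V: "V > 0" and phi: "\<phi> > 0"
  shows "mono (\<lambda>y. l_delta \<nu> a \<kappa> \<Theta> \<delta> y V \<phi>)"
proof (rule monoI)
  fix y1 y2 :: real assume y: "y1 \<le> y2"
  show "l_delta \<nu> a \<kappa> \<Theta> \<delta> y1 V \<phi> \<le> l_delta \<nu> a \<kappa> \<Theta> \<delta> y2 V \<phi>"
    unfolding l_delta_def
  proof (rule inf_conv_anti)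
    show "ereal ` {\<mu> \<in> mean_space \<kappa> \<Theta>. edf_Fstar \<nu> a \<kappa> \<Theta> y2 \<mu> V \<phi> \<le> 1 - \<delta>}
        \<subseteq> ereal ` {\<mu> \<in> mean_space \<kappa> \<Theta>. edf_Fstar \<nu> a \<kappa> \<Theta> y1 \<mu> V \<phi> \<le> 1 - \<delta>}"
      using Fstar_mono[OF A1 V phi _ y] by (force intro: order_trans)
  qed auto
qed

lemma u_mono:
  assumes A1: "A1 \<nu> \<Theta>" and V: "V > 0" and phi: "\<phi> > 0"
  shows "mono (\<lambda>y. u_delta \<nu> a \<kappa> \<Theta> \<delta> y V \<phi>)"
proof (rule monoI)
  fix y1 y2 :: real assume y: "y1 \<le> y2"
  show "u_delta \<nu> a \<kappa> \<Theta> \<delta> y1 V \<phi> \<le> u_delta \<nu> a \<kappa> \<Theta> \<delta> y2 V \<phi>"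
    unfolding u_delta_def
  proof (rule sup_conv_mono)
    show "ereal ` {\<mu> \<in> mean_space \<kappa> \<Theta>. \<delta> \<le> edf_F \<nu> a \<kappa> \<Theta> y1 \<mu> V \<phi>}
        \<subseteq> ereal ` {\<mu> \<in> mean_space \<kappa> \<Theta>. \<delta> \<le> edf_F \<nu> a \<kappa> \<Theta> y2 \<mu> V \<phi>}"
      using F_mono[OF A1 V phi _ y] by (force intro: order_trans)
  qed auto
qed

lemma Fstar_at:
  assumes A1: "A1 \<nu> \<Theta>" and V: "V > 0" and phi: "\<phi> > 0" and th: "\<theta> \<in> interior \<Theta>"
  shows "edf_Fstar \<nu> a \<kappa> \<Theta> y (deriv \<kappa> \<theta>) V \<phi> = measure (edfw \<theta> (V / \<phi>)) {..<y}"
    and "edf_F \<nu> a \<kappa> \<Theta> y (deriv \<kappa> \<theta>) V \<phi> = measure (edfw \<theta> (V / \<phi>)) {..y}"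
  unfolding edf_Fstar_def edf_F_def using link_h_eq[OF A1 th] V phi by (simp_all add: EDF_edfw)

lemma mean_in: "\<theta> \<in> interior \<Theta> \<Longrightarrow> deriv \<kappa> \<theta> \<in> mean_space \<kappa> \<Theta>"
  unfolding mean_space_def by simp

end


context edf_ctx
begin

lemma event_prep:
  fixes Y :: "nat \<Rightarrow> 'b \<Rightarrow> real"
  assumes M: "prob_space M" and phi: "\<phi> > 0"
    and ind: "prob_space.indep_vars M (\<lambda>_. borel) Y I0"
    and fin: "finite I" "I \<noteq> {}" "I \<subseteq> I0"
    and vth: "\<forall>i\<in>I. v i > 0 \<and> \<theta> i \<in> interior \<Theta>"
    and dis: "\<forall>i\<in>I. distr M borel (Y i) = EDF \<nu> a \<kappa> (\<theta> i) (v i) \<phi>"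
  shows "(\<Sum>i\<in>I. v i) > 0"
    and "(\<lambda>\<omega>. \<Sum>i\<in>I. v i / \<phi> * Y i \<omega>) \<in> borel_measurable M"
    and "\<And>\<omega>. (1 / (\<Sum>i\<in>I. v i)) * (\<Sum>i\<in>I. v i * Y i \<omega>) = (\<Sum>i\<in>I. v i / \<phi> * Y i \<omega>) / ((\<Sum>i\<in>I. v i) / \<phi>)"
    and "(\<Sum>i\<in>I. v i / \<phi>) = (\<Sum>i\<in>I. v i) / \<phi>"
    and "\<forall>i\<in>I. distr M borel (\<lambda>\<omega>. v i / \<phi> * Y i \<omega>) = Dw (\<theta> i) (v i / \<phi>)"
proof -
  interpret M: prob_space M by (rule M)
  show V: "(\<Sum>i\<in>I. v i) > 0" using fin vth by (intro sum_pos) auto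
  have Ym: "Y i \<in> borel_measurable M" if "i \<in> I" for i
    using ind that fin unfolding M.indep_vars_def by auto
  show "(\<lambda>\<omega>. \<Sum>i\<in>I. v i / \<phi> * Y i \<omega>) \<in> borel_measurable M"
    using Ym by (intro borel_measurable_sum borel_measurable_times borel_measurable_const) auto
  fix \<omega>
  have "(\<Sum>i\<in>I. v i / \<phi> * Y i \<omega>) = (\<Sum>i\<in>I. v i * Y i \<omega>) / \<phi>"
    by (simp add: sum_divide_distrib)
  thus "(1 / (\<Sum>i\<in>I. v i)) * (\<Sum>i\<in>I. v i * Y i \<omega>) = (\<Sum>i\<in>I. v i / \<phi> * Y i \<omega>) / ((\<Sum>i\<in>I. v i) / \<phi>)"
    using phi V by simp
next
  show "(\<Sum>i\<in>I. v i / \<phi>) = (\<Sum>i\<in>I. v i) / \<phi>" by (simp add: sum_divide_distrib)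
next
  interpret M: prob_space M by (rule M)
  have Ym: "Y i \<in> borel_measurable M" if "i \<in> I" for i
    using ind that fin unfolding M.indep_vars_def by auto
  show "\<forall>i\<in>I. distr M borel (\<lambda>\<omega>. v i / \<phi> * Y i \<omega>) = Dw (\<theta> i) (v i / \<phi>)"
    using law_scaled[OF phi _ Ym] vth dis by auto
qed

lemma lower_event_bound:
  fixes Y :: "nat \<Rightarrow> 'b \<Rightarrow> real"
  assumes M: "prob_space M" and A1: "A1 \<nu> \<Theta>" and phi: "\<phi> > 0"
    and ind: "prob_space.indep_vars M (\<lambda>_. borel) Y I0"
    and fin: "finite I" "I \<noteq> {}" "I \<subseteq> I0"
    and vth: "\<forall>i\<in>I. v i > 0 \<and> \<theta> i \<in> interior \<Theta>"
    and dis: "\<forall>i\<in>I. distr M borel (Y i) = EDF \<nu> a \<kappa> (\<theta> i) (v i) \<phi>"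
    and ts: "ts \<in> interior \<Theta>" and le: "\<forall>i\<in>I. \<theta> i \<le> ts"
    and d: "0 < \<delta>" "\<delta> < 1"
  shows "measure M {\<omega> \<in> space M. ereal (deriv \<kappa> ts) < l_delta \<nu> a \<kappa> \<Theta> \<delta> ((1 / (\<Sum>i\<in>I. v i)) * (\<Sum>i\<in>I. v i * Y i \<omega>)) (\<Sum>i\<in>I. v i) \<phi>} \<le> \<delta>"
proof -
  interpret M: prob_space M by (rule M)
  note stp = event_prep[OF M phi ind fin vth dis]
  define V where "V = (\<Sum>i\<in>I. v i)"
  have V: "V > 0" using stp(1) by (simp add: V_def)
  define W where "W = V / \<phi>"
  have W: "W > 0" using V phi by (simp add: W_def)
  define S where "S \<omega> = (\<Sum>i\<in>I. v i / \<phi> * Y i \<omega>)" for \<omega>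
  have Sm: "S \<in> borel_measurable M" unfolding S_def using stp(2) .
  define lf where "lf y = l_delta \<nu> a \<kappa> \<Theta> \<delta> y V \<phi>" for y
  have lfm: "mono lf" unfolding lf_def by (rule l_mono[OF A1 V phi])
  define A where "A = {s. ereal (deriv \<kappa> ts) < lf (s / W)}"
  have upA: "upset A" unfolding upset_def A_def
  proof (intro ballI allI impI)
    fix x y assume "x \<in> {s. ereal (deriv \<kappa> ts) < lf (s / W)}" "x \<le> y"
    moreover have "lf (x / W) \<le> lf (y / W)" using \<open>x \<le> y\<close> W lfm by (intro monoD[OF lfm] divide_right_mono) auto
    ultimately show "y \<in> {s. ereal (deriv \<kappa> ts) < lf (s / W)}" by auto
  qed
  have tsT: "ts \<in> \<Theta>" using ts interior_subset by blast
  have ev: "{\<omega> \<in> space M. ereal (deriv \<kappa> ts) < l_delta \<nu> a \<kappa> \<Theta> \<delta> ((1 / (\<Sum>i\<in>I. v i)) * (\<Sum>i\<in>I. v i * Y i \<omega>)) (\<Sum>i\<in>I. v i) \<phi>}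
      = S -` A \<inter> space M"
  proof -
    have zeq: "\<And>\<omega>. (1 / (\<Sum>i\<in>I. v i)) * (\<Sum>i\<in>I. v i * Y i \<omega>) = S \<omega> / W"
      unfolding S_def W_def V_def by (rule stp(3))
    show ?thesis unfolding zeq by (auto simp: A_def lf_def V_def)
  qed
  have stl: "st_le (distr M borel S) (Dw ts W)"
    unfolding S_def W_def V_def stp(4)[symmetric]
  proof (rule sum_law[OF M ind fin _ ts stp(5)])
    show "\<forall>i\<in>I. 0 < v i / \<phi>" using vth phi by auto
    show "\<forall>i\<in>I. \<theta> i \<in> \<Theta>" using vth interior_subset by blast
    show "\<forall>i\<in>I. st_le (Dw (\<theta> i) (v i / \<phi>)) (Dw ts (v i / \<phi>))"
      using vth phi le tsT interior_subset by (auto intro!: st_le_Dw)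
  qed (auto intro: st_le_conv prob_space.finite_measure)
  interpret D: prob_space "Dw ts W" by (rule prob_Dw[OF W tsT])
  interpret L: prob_space "distr M borel S" by (rule M.prob_space_distr[OF Sm])
  interpret E: prob_space "edfw ts W" by (rule prob_edfw[OF W tsT])
  have Ab: "A \<in> sets borel" by (rule upset_borel[OF upA])
  have "measure M (S -` A \<inter> space M) = measure (distr M borel S) A"
    by (rule measure_distr[symmetric, OF Sm Ab])
  also have "\<dots> \<le> measure (Dw ts W) A"
    using stl upA unfolding st_le_def by (simp add: L.emeasure_eq_measure D.emeasure_eq_measure)
  also have "\<dots> = measure (edfw ts W) {y. W * y \<in> A}"
    unfolding Dw_def using Ab W by (subst measure_distr) (simp_all add: space_edfw vimage_def measurable_cong_sets[OF sets_edfw refl])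
  also have "{y. W * y \<in> A} = {y. ereal (deriv \<kappa> ts) < lf y}" using W by (simp add: A_def)
  also have "measure (edfw ts W) {y. ereal (deriv \<kappa> ts) < lf y} \<le> measure (edfw ts W) {y. 1 - \<delta> < measure (edfw ts W) {..<y}}"
  proof (rule E.finite_measure_mono)
    have "upset {y. 1 - \<delta> < measure (edfw ts W) {..<y}}" unfolding upset_def
    proof (intro ballI allI impI)
      fix x y assume "x \<in> {y. 1 - \<delta> < measure (edfw ts W) {..<y}}" "x \<le> y"
      moreover have "measure (edfw ts W) {..<x} \<le> measure (edfw ts W) {..<y}"
        using \<open>x \<le> y\<close> W by (intro E.finite_measure_mono) auto
      ultimately show "y \<in> {y. 1 - \<delta> < measure (edfw ts W) {..<y}}" by auto
    qed
    thus "{y. 1 - \<delta> < measure (edfw ts W) {..<y}} \<in> sets (edfw ts W)" using W upset_borel by simp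
    show "{y. ereal (deriv \<kappa> ts) < lf y} \<subseteq> {y. 1 - \<delta> < measure (edfw ts W) {..<y}}"
    proof
      fix y assume y: "y \<in> {y. ereal (deriv \<kappa> ts) < lf y}"
      show "y \<in> {y. 1 - \<delta> < measure (edfw ts W) {..<y}}"
      proof (rule ccontr)
        assume "y \<notin> {y. 1 - \<delta> < measure (edfw ts W) {..<y}}"
        hence "edf_Fstar \<nu> a \<kappa> \<Theta> y (deriv \<kappa> ts) V \<phi> \<le> 1 - \<delta>"
          using Fstar_at(1)[OF A1 V phi ts] by (simp add: W_def)
        hence mem: "ereal (deriv \<kappa> ts) \<in> ereal ` {\<mu> \<in> mean_space \<kappa> \<Theta>. edf_Fstar \<nu> a \<kappa> \<Theta> y \<mu> V \<phi> \<le> 1 - \<delta>}"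
          using mean_in[OF ts] by blast
        hence "lf y \<le> ereal (deriv \<kappa> ts)"
          unfolding lf_def l_delta_def inf_conv_def by (auto intro: Inf_lower)
        thus False using y by simp
      qed
    qed
  qed
  also have "\<dots> \<le> \<delta>" by (rule quantile_lower[OF E.prob_space_axioms sets_edfw[OF W] d])
  finally show ?thesis using ev by (simp add: V_def)
qed

lemma upper_event_bound:
  fixes Y :: "nat \<Rightarrow> 'b \<Rightarrow> real"
  assumes M: "prob_space M" and A1: "A1 \<nu> \<Theta>" and phi: "\<phi> > 0"
    and ind: "prob_space.indep_vars M (\<lambda>_. borel) Y I0"
    and fin: "finite I" "I \<noteq> {}" "I \<subseteq> I0"
    and vth: "\<forall>i\<in>I. v i > 0 \<and> \<theta> i \<in> interior \<Theta>"
    and dis: "\<forall>i\<in>I. distr M borel (Y i) = EDF \<nu> a \<kappa> (\<theta> i) (v i) \<phi>"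
    and ts: "ts \<in> interior \<Theta>" and le: "\<forall>i\<in>I. ts \<le> \<theta> i"
    and d: "0 < \<delta>" "\<delta> < 1"
  shows "measure M {\<omega> \<in> space M. u_delta \<nu> a \<kappa> \<Theta> \<delta> ((1 / (\<Sum>i\<in>I. v i)) * (\<Sum>i\<in>I. v i * Y i \<omega>)) (\<Sum>i\<in>I. v i) \<phi> < ereal (deriv \<kappa> ts)} \<le> \<delta>"
proof -
  interpret M: prob_space M by (rule M)
  note stp = event_prep[OF M phi ind fin vth dis]
  define V where "V = (\<Sum>i\<in>I. v i)"
  have V: "V > 0" using stp(1) by (simp add: V_def)
  define W where "W = V / \<phi>"
  have W: "W > 0" using V phi by (simp add: W_def)
  define S where "S \<omega> = (\<Sum>i\<in>I. v i / \<phi> * Y i \<omega>)" for \<omega>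
  have Sm: "S \<in> borel_measurable M" unfolding S_def using stp(2) .
  define uf where "uf y = u_delta \<nu> a \<kappa> \<Theta> \<delta> y V \<phi>" for y
  have ufm: "mono uf" unfolding uf_def by (rule u_mono[OF A1 V phi])
  define B where "B = {s. uf (s / W) < ereal (deriv \<kappa> ts)}"
  have upB: "upset (- B)" unfolding upset_def B_def
  proof (intro ballI allI impI)
    fix x y assume "x \<in> - {s. uf (s / W) < ereal (deriv \<kappa> ts)}" "x \<le> y"
    moreover have "uf (x / W) \<le> uf (y / W)" using \<open>x \<le> y\<close> W by (intro monoD[OF ufm] divide_right_mono) auto
    ultimately show "y \<in> - {s. uf (s / W) < ereal (deriv \<kappa> ts)}" by auto
  qed
  have Bb: "B \<in> sets borel"
  proof -
    have "space borel - (- B) \<in> sets borel" by (rule sets.compl_sets[OF upset_borel[OF upB]])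
    moreover have "space borel - (- B) = B" by auto
    ultimately show ?thesis by simp
  qed
  have tsT: "ts \<in> \<Theta>" using ts interior_subset by blast
  have ev: "{\<omega> \<in> space M. u_delta \<nu> a \<kappa> \<Theta> \<delta> ((1 / (\<Sum>i\<in>I. v i)) * (\<Sum>i\<in>I. v i * Y i \<omega>)) (\<Sum>i\<in>I. v i) \<phi> < ereal (deriv \<kappa> ts)}
      = S -` B \<inter> space M"
  proof -
    have zeq: "\<And>\<omega>. (1 / (\<Sum>i\<in>I. v i)) * (\<Sum>i\<in>I. v i * Y i \<omega>) = S \<omega> / W"
      unfolding S_def W_def V_def by (rule stp(3))
    show ?thesis unfolding zeq by (auto simp: B_def uf_def V_def)
  qed
  have stl: "st_le (Dw ts W) (distr M borel S)"
    unfolding S_def W_def V_def stp(4)[symmetric]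
  proof (rule sum_law[OF M ind fin _ ts stp(5), where R="\<lambda>P Q. st_le Q P"])
    show "\<forall>i\<in>I. 0 < v i / \<phi>" using vth phi by auto
    show "\<forall>i\<in>I. \<theta> i \<in> \<Theta>" using vth interior_subset by blast
    show "\<forall>i\<in>I. st_le (Dw ts (v i / \<phi>)) (Dw (\<theta> i) (v i / \<phi>))"
      using vth phi le tsT interior_subset by (auto intro!: st_le_Dw)
  qed (auto intro: st_le_conv prob_space.finite_measure)
  interpret D: prob_space "Dw ts W" by (rule prob_Dw[OF W tsT])
  interpret L: prob_space "distr M borel S" by (rule M.prob_space_distr[OF Sm])
  interpret E: prob_space "edfw ts W" by (rule prob_edfw[OF W tsT])
  have spD: "space (Dw ts W) = UNIV" "space (distr M borel S) = UNIV" by (simp_all add: Dw_def)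
  have "measure M (S -` B \<inter> space M) = measure (distr M borel S) B"
    by (rule measure_distr[symmetric, OF Sm Bb])
  also have "\<dots> = 1 - measure (distr M borel S) (- B)"
    using L.prob_compl[of B] Bb spD by (simp add: Compl_eq_Diff_UNIV)
  also have "\<dots> \<le> 1 - measure (Dw ts W) (- B)"
    using stl upB unfolding st_le_def by (simp add: L.emeasure_eq_measure D.emeasure_eq_measure)
  also have "\<dots> = measure (Dw ts W) B"
    using D.prob_compl[of B] Bb spD by (simp add: Compl_eq_Diff_UNIV)
  also have "\<dots> = measure (edfw ts W) {y. W * y \<in> B}"
    unfolding Dw_def using Bb W by (subst measure_distr) (simp_all add: space_edfw vimage_def measurable_cong_sets[OF sets_edfw refl])
  also have "{y. W * y \<in> B} = {y. uf y < ereal (deriv \<kappa> ts)}" using W by (simp add: B_def)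
  also have "measure (edfw ts W) {y. uf y < ereal (deriv \<kappa> ts)} \<le> measure (edfw ts W) {y. measure (edfw ts W) {..y} < \<delta>}"
  proof (rule E.finite_measure_mono)
    have "upset (- {y. measure (edfw ts W) {..y} < \<delta>})" unfolding upset_def
    proof (intro ballI allI impI)
      fix x y assume "x \<in> - {y. measure (edfw ts W) {..y} < \<delta>}" "x \<le> y"
      moreover have "measure (edfw ts W) {..x} \<le> measure (edfw ts W) {..y}"
        using \<open>x \<le> y\<close> W by (intro E.finite_measure_mono) auto
      ultimately show "y \<in> - {y. measure (edfw ts W) {..y} < \<delta>}" by auto
    qed
    hence "space borel - (- {y. measure (edfw ts W) {..y} < \<delta>}) \<in> sets borel"
      by (intro sets.compl_sets upset_borel)
    moreover have "space borel - (- {y. measure (edfw ts W) {..y} < \<delta>}) = {y. measure (edfw ts W) {..y} < \<delta>}" by auto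
    ultimately have "{y. measure (edfw ts W) {..y} < \<delta>} \<in> sets borel" by simp
    thus "{y. measure (edfw ts W) {..y} < \<delta>} \<in> sets (edfw ts W)" using W by simp
    show "{y. uf y < ereal (deriv \<kappa> ts)} \<subseteq> {y. measure (edfw ts W) {..y} < \<delta>}"
    proof
      fix y assume y: "y \<in> {y. uf y < ereal (deriv \<kappa> ts)}"
      show "y \<in> {y. measure (edfw ts W) {..y} < \<delta>}"
      proof (rule ccontr)
        assume "y \<notin> {y. measure (edfw ts W) {..y} < \<delta>}"
        hence "\<delta> \<le> edf_F \<nu> a \<kappa> \<Theta> y (deriv \<kappa> ts) V \<phi>"
          using Fstar_at(2)[OF A1 V phi ts] by (simp add: W_def)
        hence mem: "ereal (deriv \<kappa> ts) \<in> ereal ` {\<mu> \<in> mean_space \<kappa> \<Theta>. \<delta> \<le> edf_F \<nu> a \<kappa> \<Theta> y \<mu> V \<phi>}"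
          using mean_in[OF ts] by blast
        hence "ereal (deriv \<kappa> ts) \<le> uf y"
          unfolding uf_def u_delta_def sup_conv_def by (auto intro: Sup_upper)
        thus False using y by simp
      qed
    qed
  qed
  also have "\<dots> \<le> \<delta>" by (rule quantile_upper[OF E.prob_space_axioms sets_edfw[OF W] d])
  finally show ?thesis using ev by (simp add: V_def)
qed

end


theorem theorem4p1:
  fixes M :: "'a measure" and Y :: "nat \<Rightarrow> 'a \<Rightarrow> real"
    and \<nu> :: "real \<Rightarrow> real measure" and a :: "real \<Rightarrow> real \<Rightarrow> real"
    and \<kappa> :: "real \<Rightarrow> real" and \<Theta> :: "real set"
    and \<phi> \<alpha> :: real and n :: nat and \<theta> v :: "nat \<Rightarrow> real" and J :: "(nat \<times> nat) set"
  assumes "prob_space M"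
    and "is_EDF_family \<nu> a \<kappa> \<Theta>"
    and "A1 \<nu> \<Theta>"
    and "\<phi> > 0"
    and "prob_space.indep_vars M (\<lambda>_. borel) Y {1..n}"
    and "\<forall>i\<in>{1..n}. v i > 0 \<and> \<theta> i \<in> interior \<Theta>"
    and "\<forall>i\<in>{1..n}. distr M borel (Y i) = EDF \<nu> a \<kappa> (\<theta> i) (v i) \<phi>"
    and "\<forall>i\<in>{1..n}. \<forall>j\<in>{1..n}. i \<le> j \<longrightarrow> \<theta> i \<le> \<theta> j"
    and "J \<subseteq> {1..n} \<times> {1..n}"
    and "\<forall>(j, k)\<in>J. j \<le> k"
    and "0 < 1 - \<alpha>" and "1 - \<alpha> < 1"
  shows "measure M {\<omega> \<in> space M. \<forall>i\<in>{1..n}.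
            L_bound \<nu> a \<kappa> \<Theta> \<phi> (\<alpha> / (2 * real (card J))) J \<theta> v Y i \<omega> \<le> ereal (\<integral>\<omega>'. Y i \<omega>' \<partial>M)
          \<and> ereal (\<integral>\<omega>'. Y i \<omega>' \<partial>M) \<le> U_bound \<nu> a \<kappa> \<Theta> \<phi> (\<alpha> / (2 * real (card J))) J \<theta> v Y i \<omega>}
         \<ge> 1 - \<alpha>"
proof -
  note prob = assms(1) and fam = assms(2) and A1 = assms(3) and phi = assms(4) and ind = assms(5)
    and vth = assms(6) and dis = assms(7) and thmono = assms(8) and Jsub = assms(9) and Jord = assms(10)
    and al = assms(11,12)
  interpret M: prob_space M by (rule prob)
  interpret E: edf_ctx \<nu> a \<kappa> \<Theta> by unfold_locales (rule fam)
  define \<delta> where "\<delta> = \<alpha> / (2 * real (card J))"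
  define \<mu> where "\<mu> i = (\<integral>\<omega>'. Y i \<omega>' \<partial>M)" for i
  define MS where "MS = mean_space \<kappa> \<Theta>"
  have finJ: "finite J" by (rule finite_subset[OF Jsub]) simp
  have Ym[measurable]: "Y i \<in> borel_measurable M" if "i \<in> {1..n}" for i
    using ind that unfolding M.indep_vars_def by auto
  have mu_eq: "\<mu> i = deriv \<kappa> (\<theta> i)" if i: "i \<in> {1..n}" for i
  proof -
    have "\<mu> i = (\<integral>y. y \<partial>distr M borel (Y i))"
      unfolding \<mu>_def by (rule integral_distr[symmetric, OF Ym[OF i]]) simp
    also have "\<dots> = (\<integral>y. y \<partial>E.edfw (\<theta> i) (v i / \<phi>))"
      using dis i vth phi by (simp add: E.EDF_edfw)
    also have "\<dots> = deriv \<kappa> (\<theta> i)"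
      using vth i phi by (intro E.deriv_kappa_mean[symmetric]) auto
    finally show ?thesis .
  qed
  have mu_MS: "\<mu> i \<in> MS" if "i \<in> {1..n}" for i
    using mu_eq[OF that] vth that E.mean_in by (simp add: MS_def)
  have mu_mono: "\<mu> k \<le> \<mu> i" if "i \<in> {1..n}" "k \<in> {1..n}" "\<theta> k \<le> \<theta> i" for i k
    using that mu_eq vth by (simp add: E.deriv_kappa_mono[OF A1])
  have Jn: "j \<in> {1..n} \<and> k \<in> {1..n} \<and> j \<le> k" if "(j, k) \<in> J" for j k
    using that Jsub Jord by auto
  have volpos: "vol v j k > 0" if "(j, k) \<in> J" for j k
    unfolding vol_def using Jn[OF that] vth by (intro sum_pos) auto
  have Zm[measurable]: "(\<lambda>\<omega>. Zmean v Y j k \<omega>) \<in> borel_measurable M" if "(j, k) \<in> J" for j k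
    unfolding Zmean_def using Jn[OF that] by (intro borel_measurable_times borel_measurable_const borel_measurable_sum) auto
  have lm[measurable]: "(\<lambda>y. l_delta \<nu> a \<kappa> \<Theta> \<delta> y (vol v j k) \<phi>) \<in> borel_measurable borel" if "(j, k) \<in> J" for j k
    by (rule borel_measurable_mono_ereal[OF E.l_mono[OF A1 volpos[OF that] phi]])
  have um[measurable]: "(\<lambda>y. u_delta \<nu> a \<kappa> \<Theta> \<delta> y (vol v j k) \<phi>) \<in> borel_measurable borel" if "(j, k) \<in> J" for j k
    by (rule borel_measurable_mono_ereal[OF E.u_mono[OF A1 volpos[OF that] phi]])
  define EL where "EL p = {\<omega> \<in> space M. ereal (\<mu> (snd p)) < l_delta \<nu> a \<kappa> \<Theta> \<delta> (Zmean v Y (fst p) (snd p) \<omega>) (vol v (fst p) (snd p)) \<phi>}" for p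
  define EU where "EU p = {\<omega> \<in> space M. u_delta \<nu> a \<kappa> \<Theta> \<delta> (Zmean v Y (fst p) (snd p) \<omega>) (vol v (fst p) (snd p)) \<phi> < ereal (\<mu> (fst p))}" for p
  have ELs: "EL p \<in> sets M" if "p \<in> J" for p
  proof -
    obtain j k where p: "p = (j, k)" by fastforce
    have [measurable]: "(\<lambda>\<omega>. l_delta \<nu> a \<kappa> \<Theta> \<delta> (Zmean v Y j k \<omega>) (vol v j k) \<phi>) \<in> borel_measurable M"
      using that p by (intro measurable_compose[OF Zm lm]) auto
    show ?thesis unfolding EL_def p by simp
  qed
  have EUs: "EU p \<in> sets M" if "p \<in> J" for p
  proof -
    obtain j k where p: "p = (j, k)" by fastforce
    have [measurable]: "(\<lambda>\<omega>. u_delta \<nu> a \<kappa> \<Theta> \<delta> (Zmean v Y j k \<omega>) (vol v j k) \<phi>) \<in> borel_measurable M"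
      using that p by (intro measurable_compose[OF Zm um]) auto
    show ?thesis unfolding EU_def p by simp
  qed
  have dpos: "0 < \<delta> \<and> \<delta> < 1" if "J \<noteq> {}"
  proof -
    have c: "card J \<ge> 1" using that finJ by (simp add: Suc_le_eq card_gt_0_iff)
    have "\<alpha> > 0" "\<alpha> < 1" using al by auto
    moreover have "\<alpha> / (2 * real (card J)) \<le> \<alpha> / 2"
      using c \<open>\<alpha> > 0\<close> by (intro divide_left_mono) auto
    ultimately show ?thesis using c by (auto simp: \<delta>_def)
  qed
  have ELb: "measure M (EL p) \<le> \<delta>" if p: "p \<in> J" for p
  proof -
    obtain j k where pjk: "p = (j, k)" by fastforce
    have jk: "j \<in> {1..n}" "k \<in> {1..n}" "j \<le> k" using Jn p pjk by auto
    have "measure M {\<omega> \<in> space M. ereal (deriv \<kappa> (\<theta> k)) < l_delta \<nu> a \<kappa> \<Theta> \<delta> ((1 / (\<Sum>i\<in>{j..k}. v i)) * (\<Sum>i\<in>{j..k}. v i * Y i \<omega>)) (\<Sum>i\<in>{j..k}. v i) \<phi>} \<le> \<delta>"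
    proof (rule E.lower_event_bound[OF prob A1 phi ind])
      show "finite {j..k}" "{j..k} \<noteq> {}" "{j..k} \<subseteq> {1..n}" using jk by auto
      show "\<forall>i\<in>{j..k}. 0 < v i \<and> \<theta> i \<in> interior \<Theta>" using vth jk by auto
      show "\<forall>i\<in>{j..k}. distr M borel (Y i) = EDF \<nu> a \<kappa> (\<theta> i) (v i) \<phi>" using dis jk by auto
      show "\<theta> k \<in> interior \<Theta>" using vth jk by auto
      show "\<forall>i\<in>{j..k}. \<theta> i \<le> \<theta> k" using thmono jk by auto
      show "0 < \<delta>" "\<delta> < 1" using dpos p by auto
    qed
    thus ?thesis using mu_eq[OF jk(2)] by (simp add: EL_def pjk Zmean_def vol_def)
  qed
  have EUb: "measure M (EU p) \<le> \<delta>" if p: "p \<in> J" for p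
  proof -
    obtain j k where pjk: "p = (j, k)" by fastforce
    have jk: "j \<in> {1..n}" "k \<in> {1..n}" "j \<le> k" using Jn p pjk by auto
    have "measure M {\<omega> \<in> space M. u_delta \<nu> a \<kappa> \<Theta> \<delta> ((1 / (\<Sum>i\<in>{j..k}. v i)) * (\<Sum>i\<in>{j..k}. v i * Y i \<omega>)) (\<Sum>i\<in>{j..k}. v i) \<phi> < ereal (deriv \<kappa> (\<theta> j))} \<le> \<delta>"
    proof (rule E.upper_event_bound[OF prob A1 phi ind])
      show "finite {j..k}" "{j..k} \<noteq> {}" "{j..k} \<subseteq> {1..n}" using jk by auto
      show "\<forall>i\<in>{j..k}. 0 < v i \<and> \<theta> i \<in> interior \<Theta>" using vth jk by auto
      show "\<forall>i\<in>{j..k}. distr M borel (Y i) = EDF \<nu> a \<kappa> (\<theta> i) (v i) \<phi>" using dis jk by auto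
      show "\<theta> j \<in> interior \<Theta>" using vth jk by auto
      show "\<forall>i\<in>{j..k}. \<theta> j \<le> \<theta> i" using thmono jk by auto
      show "0 < \<delta>" "\<delta> < 1" using dpos p by auto
    qed
    thus ?thesis using mu_eq[OF jk(1)] by (simp add: EU_def pjk Zmean_def vol_def)
  qed
  define G where "G = {\<omega> \<in> space M. \<forall>i\<in>{1..n}.
            L_bound \<nu> a \<kappa> \<Theta> \<phi> \<delta> J \<theta> v Y i \<omega> \<le> ereal (\<mu> i)
          \<and> ereal (\<mu> i) \<le> U_bound \<nu> a \<kappa> \<Theta> \<phi> \<delta> J \<theta> v Y i \<omega>}"
  have Gsub: "space M - (\<Union>p\<in>J. EL p \<union> EU p) \<subseteq> G"
  proof
    fix \<omega> assume \<omega>: "\<omega> \<in> space M - (\<Union>p\<in>J. EL p \<union> EU p)"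
    have nL: "l_delta \<nu> a \<kappa> \<Theta> \<delta> (Zmean v Y j k \<omega>) (vol v j k) \<phi> \<le> ereal (\<mu> k)" if "(j, k) \<in> J" for j k
      using \<omega> that unfolding EL_def by (force simp: not_less)
    have nU: "ereal (\<mu> j) \<le> u_delta \<nu> a \<kappa> \<Theta> \<delta> (Zmean v Y j k \<omega>) (vol v j k) \<phi>" if "(j, k) \<in> J" for j k
      using \<omega> that unfolding EU_def by (force simp: not_less)
    show "\<omega> \<in> G" unfolding G_def
    proof (intro CollectI conjI ballI)
      show "\<omega> \<in> space M" using \<omega> by simp
    next
      fix i assume i: "i \<in> {1..n}"
      show "L_bound \<nu> a \<kappa> \<Theta> \<phi> \<delta> J \<theta> v Y i \<omega> \<le> ereal (\<mu> i)"
      proof (cases "{(j, k) \<in> J. \<theta> k \<le> \<theta> i} = {}")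
        case True
        have "Inf (ereal ` mean_space \<kappa> \<Theta>) \<le> ereal (\<mu> i)"
          using mu_MS[OF i] by (intro Inf_lower) (simp add: MS_def)
        thus ?thesis by (simp only: L_bound_def sup_conv_def image_is_empty True) simp
      next
        case False
        have "Sup ((\<lambda>(j, k). l_delta \<nu> a \<kappa> \<Theta> \<delta> (Zmean v Y j k \<omega>) (vol v j k) \<phi>) ` {(j, k) \<in> J. \<theta> k \<le> \<theta> i}) \<le> ereal (\<mu> i)"
        proof (rule Sup_least)
          fix x assume "x \<in> (\<lambda>(j, k). l_delta \<nu> a \<kappa> \<Theta> \<delta> (Zmean v Y j k \<omega>) (vol v j k) \<phi>) ` {(j, k) \<in> J. \<theta> k \<le> \<theta> i}"
          then obtain j k where jk: "(j, k) \<in> J" "\<theta> k \<le> \<theta> i" and x: "x = l_delta \<nu> a \<kappa> \<Theta> \<delta> (Zmean v Y j k \<omega>) (vol v j k) \<phi>"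
            by auto
          have "x \<le> ereal (\<mu> k)" using nL[OF jk(1)] x by simp
          also have "\<dots> \<le> ereal (\<mu> i)" using mu_mono[OF i _ jk(2)] Jn[OF jk(1)] by simp
          finally show "x \<le> ereal (\<mu> i)" .
        qed
        thus ?thesis by (simp only: L_bound_def sup_conv_def image_is_empty False if_False)
      qed
      show "ereal (\<mu> i) \<le> U_bound \<nu> a \<kappa> \<Theta> \<phi> \<delta> J \<theta> v Y i \<omega>"
      proof (cases "{(j, k) \<in> J. \<theta> i \<le> \<theta> j} = {}")
        case True
        have "ereal (\<mu> i) \<le> Sup (ereal ` mean_space \<kappa> \<Theta>)"
          using mu_MS[OF i] by (intro Sup_upper) (simp add: MS_def)
        thus ?thesis by (simp only: U_bound_def inf_conv_def image_is_empty True) simp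
      next
        case False
        have "ereal (\<mu> i) \<le> Inf ((\<lambda>(j, k). u_delta \<nu> a \<kappa> \<Theta> \<delta> (Zmean v Y j k \<omega>) (vol v j k) \<phi>) ` {(j, k) \<in> J. \<theta> i \<le> \<theta> j})"
        proof (rule Inf_greatest)
          fix x assume "x \<in> (\<lambda>(j, k). u_delta \<nu> a \<kappa> \<Theta> \<delta> (Zmean v Y j k \<omega>) (vol v j k) \<phi>) ` {(j, k) \<in> J. \<theta> i \<le> \<theta> j}"
          then obtain j k where jk: "(j, k) \<in> J" "\<theta> i \<le> \<theta> j" and x: "x = u_delta \<nu> a \<kappa> \<Theta> \<delta> (Zmean v Y j k \<omega>) (vol v j k) \<phi>"
            by auto
          have "ereal (\<mu> i) \<le> ereal (\<mu> j)" using mu_mono[OF _ i jk(2)] Jn[OF jk(1)] by simp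
          also have "\<dots> \<le> x" using nU[OF jk(1)] x by simp
          finally show "ereal (\<mu> i) \<le> x" .
        qed
        thus ?thesis by (simp only: U_bound_def inf_conv_def image_is_empty False if_False)
      qed
    qed
  qed
  have Lmeas[measurable]: "(\<lambda>\<omega>. L_bound \<nu> a \<kappa> \<Theta> \<phi> \<delta> J \<theta> v Y i \<omega>) \<in> borel_measurable M" for i
  proof (cases "{(j, k) \<in> J. \<theta> k \<le> \<theta> i} = {}")
    case True thus ?thesis by (simp add: L_bound_def sup_conv_def)
  next
    case False
    have eq: "L_bound \<nu> a \<kappa> \<Theta> \<phi> \<delta> J \<theta> v Y i \<omega> = (SUP p\<in>{(j, k) \<in> J. \<theta> k \<le> \<theta> i}. l_delta \<nu> a \<kappa> \<Theta> \<delta> (Zmean v Y (fst p) (snd p) \<omega>) (vol v (fst p) (snd p)) \<phi>)" for \<omega>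
      by (simp only: L_bound_def sup_conv_def image_is_empty False if_False) (simp only: case_prod_beta')
    have "(\<lambda>\<omega>. SUP p\<in>{(j, k) \<in> J. \<theta> k \<le> \<theta> i}. l_delta \<nu> a \<kappa> \<Theta> \<delta> (Zmean v Y (fst p) (snd p) \<omega>) (vol v (fst p) (snd p)) \<phi>) \<in> borel_measurable M"
    proof (rule borel_measurable_SUP)
      show "countable {(j, k) \<in> J. \<theta> k \<le> \<theta> i}" by (rule countable_finite, rule finite_subset[OF _ finJ]) auto
      fix p assume "p \<in> {(j, k) \<in> J. \<theta> k \<le> \<theta> i}"
      hence p: "(fst p, snd p) \<in> J" by auto
      show "(\<lambda>\<omega>. l_delta \<nu> a \<kappa> \<Theta> \<delta> (Zmean v Y (fst p) (snd p) \<omega>) (vol v (fst p) (snd p)) \<phi>) \<in> borel_measurable M"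
        by (rule measurable_compose[OF Zm[OF p] lm[OF p]])
    qed
    thus ?thesis using eq by simp
  qed
  have Umeas[measurable]: "(\<lambda>\<omega>. U_bound \<nu> a \<kappa> \<Theta> \<phi> \<delta> J \<theta> v Y i \<omega>) \<in> borel_measurable M" for i
  proof (cases "{(j, k) \<in> J. \<theta> i \<le> \<theta> j} = {}")
    case True thus ?thesis by (simp add: U_bound_def inf_conv_def)
  next
    case False
    have eq: "U_bound \<nu> a \<kappa> \<Theta> \<phi> \<delta> J \<theta> v Y i \<omega> = (INF p\<in>{(j, k) \<in> J. \<theta> i \<le> \<theta> j}. u_delta \<nu> a \<kappa> \<Theta> \<delta> (Zmean v Y (fst p) (snd p) \<omega>) (vol v (fst p) (snd p)) \<phi>)" for \<omega>
      by (simp only: U_bound_def inf_conv_def image_is_empty False if_False) (simp only: case_prod_beta')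
    have "(\<lambda>\<omega>. INF p\<in>{(j, k) \<in> J. \<theta> i \<le> \<theta> j}. u_delta \<nu> a \<kappa> \<Theta> \<delta> (Zmean v Y (fst p) (snd p) \<omega>) (vol v (fst p) (snd p)) \<phi>) \<in> borel_measurable M"
    proof (rule borel_measurable_INF)
      show "countable {(j, k) \<in> J. \<theta> i \<le> \<theta> j}" by (rule countable_finite, rule finite_subset[OF _ finJ]) auto
      fix p assume "p \<in> {(j, k) \<in> J. \<theta> i \<le> \<theta> j}"
      hence p: "(fst p, snd p) \<in> J" by auto
      show "(\<lambda>\<omega>. u_delta \<nu> a \<kappa> \<Theta> \<delta> (Zmean v Y (fst p) (snd p) \<omega>) (vol v (fst p) (snd p)) \<phi>) \<in> borel_measurable M"
        by (rule measurable_compose[OF Zm[OF p] um[OF p]])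
    qed
    thus ?thesis using eq by simp
  qed
  have Gs: "G \<in> sets M" unfolding G_def by measurable
  have Us: "(\<Union>p\<in>J. EL p \<union> EU p) \<in> sets M" using ELs EUs finJ by (intro sets.finite_UN) auto
  have "measure M (\<Union>p\<in>J. EL p \<union> EU p) \<le> (\<Sum>p\<in>J. measure M (EL p \<union> EU p))"
    using ELs EUs finJ by (intro M.finite_measure_subadditive_finite) auto
  also have "\<dots> \<le> (\<Sum>p\<in>J. 2 * \<delta>)"
  proof (rule sum_mono)
    fix p assume p: "p \<in> J"
    have "measure M (EL p \<union> EU p) \<le> measure M (EL p) + measure M (EU p)"
      using ELs[OF p] EUs[OF p] by (rule measure_Un_le)
    thus "measure M (EL p \<union> EU p) \<le> 2 * \<delta>" using ELb[OF p] EUb[OF p] by simp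
  qed
  also have "\<dots> \<le> \<alpha>"
  proof (cases "J = {}")
    case True thus ?thesis using al by simp
  next
    case False
    hence "card J > 0" using finJ by (simp add: card_gt_0_iff)
    thus ?thesis by (simp add: \<delta>_def)
  qed
  finally have ub: "measure M (\<Union>p\<in>J. EL p \<union> EU p) \<le> \<alpha>" .
  have "1 - \<alpha> \<le> 1 - measure M (\<Union>p\<in>J. EL p \<union> EU p)" using ub by simp
  also have "\<dots> = measure M (space M - (\<Union>p\<in>J. EL p \<union> EU p))" by (rule M.prob_compl[OF Us, symmetric])
  also have "\<dots> \<le> measure M G" using Gsub Gs by (rule M.finite_measure_mono)
  finally show ?thesis unfolding G_def \<mu>_def \<delta>_def .
qed

end
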